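(* Let $(E,\Sigma,m)$ be a $\sigma$-finite measure space and $L^1=L^1(E,\Sigma,m)$. Let $(A_0,\mathcal{D}(A_0))$ be the infinitesimal generator of a stochastic semigroup on $L^1$, let $\varphi\ge 0$ be a measurable function on $E$, and let $P\colon L^1\to L^1$ be a stochastic operator. Let $L^1_\varphi=\{u\in L^1:\int_E\varphi|u|\,dm<\infty\}$ and let $A u=A_0u-\varphi u$ be defined on a domain $\mathcal{D}(A)\subseteq\mathcal{D}(A_0)\cap L^1_\varphi$, and assume that $(A,\mathcal{D}(A))$ is the infinitesimal generator of a positive strongly continuous contraction semigroup on $L^1$. Denote by $R(\lambda,A)=(\lambda-A)^{-1}$ its resolvent. If for some $\lambda>0$ there is $v\in L^1$ with $v>0$ a.e. such that $P(\varphi R(\lambda,A)v)\le v$, then \[ \lim_{n\to\infty}\|(P(\varphi R(\lambda,A)))^n u\|=0\quad\text{for all } u\in L^1 . \]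
   Context: A linear operator $P\colon L^1\to L^1$ is stochastic if it maps the set of densities $D=\{u\in L^1: u\ge 0,\ \|u\|=1\}$ into itself. A stochastic semigroup is a strongly continuous semigroup of stochastic operators. Note that $\varphi R(\lambda,A)$ maps $L^1$ into $L^1$ since the range of $R(\lambda,A)$ is $\mathcal{D}(A)\subseteq L^1_\varphi$. *)

theory Defs
  imports "HOL-Analysis.Analysis"
begin

text \<open>Elements of L^1(E,Sigma,m) are represented by integrable real functions;
  two representatives denote the same element iff they agree a.e.
  Operators are functions on representatives which must respect a.e. equality.\<close>

definition L1 :: "'a measure \<Rightarrow> ('a \<Rightarrow> real) set" where
  "L1 M = {f. integrable M f}"

definition l1norm :: "'a measure \<Rightarrow> ('a \<Rightarrow> real) \<Rightarrow> real" where
  "l1norm M f = (\<integral>x. \<bar>f x\<bar> \<partial>M)"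

definition ae_eq :: "'a measure \<Rightarrow> ('a \<Rightarrow> real) \<Rightarrow> ('a \<Rightarrow> real) \<Rightarrow> bool" where
  "ae_eq M f g \<longleftrightarrow> (AE x in M. f x = g x)"

definition lin_op :: "'a measure \<Rightarrow> (('a \<Rightarrow> real) \<Rightarrow> ('a \<Rightarrow> real)) \<Rightarrow> bool" where
  "lin_op M T \<longleftrightarrow>
     (\<forall>f\<in>L1 M. T f \<in> L1 M) \<and>
     (\<forall>f\<in>L1 M. \<forall>g\<in>L1 M. ae_eq M f g \<longrightarrow> ae_eq M (T f) (T g)) \<and>
     (\<forall>f\<in>L1 M. \<forall>g\<in>L1 M. \<forall>a b::real.
        ae_eq M (T (\<lambda>x. a * f x + b * g x)) (\<lambda>x. a * T f x + b * T g x))"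

definition density :: "'a measure \<Rightarrow> ('a \<Rightarrow> real) \<Rightarrow> bool" where
  "density M u \<longleftrightarrow> u \<in> L1 M \<and> (AE x in M. u x \<ge> 0) \<and> l1norm M u = 1"

definition stochastic_op :: "'a measure \<Rightarrow> (('a \<Rightarrow> real) \<Rightarrow> ('a \<Rightarrow> real)) \<Rightarrow> bool" where
  "stochastic_op M T \<longleftrightarrow> lin_op M T \<and> (\<forall>u. density M u \<longrightarrow> density M (T u))"

definition positive_op :: "'a measure \<Rightarrow> (('a \<Rightarrow> real) \<Rightarrow> ('a \<Rightarrow> real)) \<Rightarrow> bool" where
  "positive_op M T \<longleftrightarrow> (\<forall>u\<in>L1 M. (AE x in M. u x \<ge> 0) \<longrightarrow> (AE x in M. T u x \<ge> 0))"

definition contraction_op :: "'a measure \<Rightarrow> (('a \<Rightarrow> real) \<Rightarrow> ('a \<Rightarrow> real)) \<Rightarrow> bool" where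
  "contraction_op M T \<longleftrightarrow> (\<forall>u\<in>L1 M. l1norm M (T u) \<le> l1norm M u)"

definition C0_semigroup :: "'a measure \<Rightarrow> (real \<Rightarrow> ('a \<Rightarrow> real) \<Rightarrow> ('a \<Rightarrow> real)) \<Rightarrow> bool" where
  "C0_semigroup M S \<longleftrightarrow>
     (\<forall>t\<ge>0. lin_op M (S t)) \<and>
     (\<forall>f\<in>L1 M. ae_eq M (S 0 f) f) \<and>
     (\<forall>s\<ge>0. \<forall>t\<ge>0. \<forall>f\<in>L1 M. ae_eq M (S (s + t) f) (S s (S t f))) \<and>
     (\<forall>f\<in>L1 M. \<forall>t0\<ge>0.
        ((\<lambda>t. l1norm M (\<lambda>x. S t f x - S t0 f x)) \<longlongrightarrow> 0) (at t0 within {0..}))"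

definition stochastic_semigroup :: "'a measure \<Rightarrow> (real \<Rightarrow> ('a \<Rightarrow> real) \<Rightarrow> ('a \<Rightarrow> real)) \<Rightarrow> bool" where
  "stochastic_semigroup M S \<longleftrightarrow> C0_semigroup M S \<and> (\<forall>t\<ge>0. stochastic_op M (S t))"

definition is_generator :: "'a measure \<Rightarrow> (real \<Rightarrow> ('a \<Rightarrow> real) \<Rightarrow> ('a \<Rightarrow> real))
    \<Rightarrow> ('a \<Rightarrow> real) set \<Rightarrow> (('a \<Rightarrow> real) \<Rightarrow> ('a \<Rightarrow> real)) \<Rightarrow> bool" where
  "is_generator M S D A \<longleftrightarrow>
     D = {f \<in> L1 M. \<exists>g\<in>L1 M.
            ((\<lambda>h. l1norm M (\<lambda>x. (S h f x - f x) / h - g x)) \<longlongrightarrow> 0) (at_right 0)} \<and>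
     (\<forall>f\<in>D. A f \<in> L1 M \<and>
            ((\<lambda>h. l1norm M (\<lambda>x. (S h f x - f x) / h - A f x)) \<longlongrightarrow> 0) (at_right 0))"

definition L1_weighted :: "'a measure \<Rightarrow> ('a \<Rightarrow> real) \<Rightarrow> ('a \<Rightarrow> real) set" where
  "L1_weighted M \<phi> = {u \<in> L1 M. (\<integral>\<^sup>+ x. ennreal (\<phi> x * \<bar>u x\<bar>) \<partial>M) < \<infinity>}"

definition resolvent :: "'a measure \<Rightarrow> ('a \<Rightarrow> real) set \<Rightarrow> (('a \<Rightarrow> real) \<Rightarrow> ('a \<Rightarrow> real))
    \<Rightarrow> real \<Rightarrow> ('a \<Rightarrow> real) \<Rightarrow> ('a \<Rightarrow> real)" where
  "resolvent M D A lam v = (SOME u. u \<in> D \<and> ae_eq M (\<lambda>x. lam * u x - A u x) v)"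

end

theory Submission
  imports Defs
begin


lemma L1_iff: "f \<in> L1 M \<longleftrightarrow> integrable M f" by (simp add: L1_def)

lemma l1norm_nonneg: "0 \<le> l1norm M f"
  unfolding l1norm_def by simp

lemma l1norm_cong: "integrable M f \<Longrightarrow> integrable M g \<Longrightarrow> ae_eq M f g \<Longrightarrow> l1norm M f = l1norm M g"
  unfolding l1norm_def ae_eq_def
  by (rule integral_cong_AE) (auto elim!: eventually_mono)

lemma l1norm_cong_meas: "f \<in> borel_measurable M \<Longrightarrow> g \<in> borel_measurable M \<Longrightarrow> ae_eq M f g \<Longrightarrow> l1norm M f = l1norm M g"
  unfolding l1norm_def ae_eq_def
  by (rule integral_cong_AE) (auto elim!: eventually_mono)

lemma l1norm_scale: "l1norm M (\<lambda>x. c * f x) = \<bar>c\<bar> * l1norm M f"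
  unfolding l1norm_def by (simp add: abs_mult)

lemma l1norm_minus: "l1norm M (\<lambda>x. - f x) = l1norm M f"
  unfolding l1norm_def by simp

lemma l1norm_add: "integrable M f \<Longrightarrow> integrable M g \<Longrightarrow> l1norm M (\<lambda>x. f x + g x) \<le> l1norm M f + l1norm M g"
proof -
  assume a: "integrable M f" "integrable M g"
  have "(\<integral>x. \<bar>f x + g x\<bar> \<partial>M) \<le> (\<integral>x. \<bar>f x\<bar> + \<bar>g x\<bar> \<partial>M)"
    using a by (intro integral_mono) (auto intro: abs_triangle_ineq)
  also have "\<dots> = (\<integral>x. \<bar>f x\<bar> \<partial>M) + (\<integral>x. \<bar>g x\<bar> \<partial>M)"
    using a by (intro Bochner_Integration.integral_add) auto
  finally show ?thesis unfolding l1norm_def .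
qed

lemma l1norm_diff: "integrable M f \<Longrightarrow> integrable M g \<Longrightarrow> l1norm M (\<lambda>x. f x - g x) \<le> l1norm M f + l1norm M g"
  using l1norm_add[of M f "\<lambda>x. - g x"] l1norm_minus[of M g] by simp

lemma l1norm_tri: "integrable M f \<Longrightarrow> integrable M g \<Longrightarrow> integrable M h \<Longrightarrow>
   l1norm M (\<lambda>x. f x - h x) \<le> l1norm M (\<lambda>x. f x - g x) + l1norm M (\<lambda>x. g x - h x)"
  using l1norm_add[of M "\<lambda>x. f x - g x" "\<lambda>x. g x - h x"] by simp

lemma l1norm_sym: "l1norm M (\<lambda>x. f x - g x) = l1norm M (\<lambda>x. g x - f x)"
  unfolding l1norm_def by (simp add: abs_minus_commute)

lemma l1norm_zero_iff: "integrable M f \<Longrightarrow> l1norm M f = 0 \<longleftrightarrow> (AE x in M. f x = 0)"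
  unfolding l1norm_def by (subst integral_nonneg_eq_0_iff_AE) auto

lemma l1norm_zero_ae: "integrable M f \<Longrightarrow> integrable M g \<Longrightarrow> l1norm M (\<lambda>x. f x - g x) = 0 \<Longrightarrow> ae_eq M f g"
  unfolding ae_eq_def by (subst (asm) l1norm_zero_iff) auto

lemma l1norm_le_zero_ae: "integrable M f \<Longrightarrow> integrable M g \<Longrightarrow> l1norm M (\<lambda>x. f x - g x) \<le> 0 \<Longrightarrow> ae_eq M f g"
  using l1norm_nonneg[of M "\<lambda>x. f x - g x"] l1norm_zero_ae[of M f g] by linarith

lemma l1norm_mono: "integrable M g \<Longrightarrow> f \<in> borel_measurable M \<Longrightarrow> (AE x in M. \<bar>f x\<bar> \<le> \<bar>g x\<bar>) \<Longrightarrow> l1norm M f \<le> l1norm M g"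
  unfolding l1norm_def
  by (rule integral_mono_AE) (auto intro: Bochner_Integration.integrable_bound[of M g])

lemma integral_abs_le_l1: "\<bar>integral\<^sup>L M f\<bar> \<le> l1norm M f"
  unfolding l1norm_def using integral_norm_bound[of M f] by simp

lemma l1norm_nonneg_eq: "(AE x in M. 0 \<le> f x) \<Longrightarrow> f \<in> borel_measurable M \<Longrightarrow> l1norm M f = integral\<^sup>L M f"
  unfolding l1norm_def by (rule integral_cong_AE) (auto elim!: eventually_mono)

lemma ae_eq_refl: "ae_eq M f f" by (simp add: ae_eq_def)
lemma ae_eq_sym: "ae_eq M f g \<Longrightarrow> ae_eq M g f" by (auto simp: ae_eq_def elim!: eventually_mono)
lemma ae_eq_trans: "ae_eq M f g \<Longrightarrow> ae_eq M g h \<Longrightarrow> ae_eq M f h"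
  unfolding ae_eq_def by (auto elim: eventually_elim2)
lemma ae_eq_ext: "(\<And>x. f x = g x) \<Longrightarrow> ae_eq M f g" by (simp add: ae_eq_def)

lemma l1_lim_unique:
  assumes F: "F \<noteq> bot" and ia: "integrable M a" and ib: "integrable M b"
    and ix: "\<forall>\<^sub>F n in F. integrable M (x n)"
    and la: "((\<lambda>n. l1norm M (\<lambda>y. x n y - a y)) \<longlongrightarrow> 0) F"
    and lb: "((\<lambda>n. l1norm M (\<lambda>y. x n y - b y)) \<longlongrightarrow> 0) F"
  shows "ae_eq M a b"
proof -
  have "((\<lambda>n. l1norm M (\<lambda>y. x n y - a y) + l1norm M (\<lambda>y. x n y - b y)) \<longlongrightarrow> 0) F"
    using tendsto_add[OF la lb] by simp
  moreover have "\<forall>\<^sub>F n in F. l1norm M (\<lambda>y. a y - b y) \<le> l1norm M (\<lambda>y. x n y - a y) + l1norm M (\<lambda>y. x n y - b y)"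
    using ix
  proof eventually_elim
    case (elim n)
    have "l1norm M (\<lambda>y. a y - b y) \<le> l1norm M (\<lambda>y. a y - x n y) + l1norm M (\<lambda>y. x n y - b y)"
      by (rule l1norm_tri) (use elim ia ib in auto)
    then show ?case using l1norm_sym[of M a "x n"] by simp
  qed
  ultimately have "l1norm M (\<lambda>y. a y - b y) \<le> 0"
    using F by (intro tendsto_le[OF F _ tendsto_const]) auto
  then show ?thesis by (rule l1norm_le_zero_ae[OF ia ib])
qed

lemma lin_L1: "lin_op M T \<Longrightarrow> integrable M f \<Longrightarrow> integrable M (T f)"
  unfolding lin_op_def L1_def by auto

lemma lin_cong: "lin_op M T \<Longrightarrow> integrable M f \<Longrightarrow> integrable M g \<Longrightarrow> ae_eq M f g \<Longrightarrow> ae_eq M (T f) (T g)"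
  unfolding lin_op_def L1_def by auto

lemma lin_lin: "lin_op M T \<Longrightarrow> integrable M f \<Longrightarrow> integrable M g \<Longrightarrow>
    ae_eq M (T (\<lambda>x. a * f x + b * g x)) (\<lambda>x. a * T f x + b * T g x)"
  unfolding lin_op_def L1_def by auto

lemma lin_cong_fun: "lin_op M T \<Longrightarrow> integrable M f \<Longrightarrow> f = g \<Longrightarrow> ae_eq M (T f) (T g)"
  by (simp add: ae_eq_refl)

lemma lin_scale: "lin_op M T \<Longrightarrow> integrable M f \<Longrightarrow> ae_eq M (T (\<lambda>x. a * f x)) (\<lambda>x. a * T f x)"
  using lin_lin[of M T f f a 0] by simp

lemma lin_add: "lin_op M T \<Longrightarrow> integrable M f \<Longrightarrow> integrable M g \<Longrightarrow>
    ae_eq M (T (\<lambda>x. f x + g x)) (\<lambda>x. T f x + T g x)"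
  using lin_lin[of M T f g 1 1] by simp

lemma lin_diff: "lin_op M T \<Longrightarrow> integrable M f \<Longrightarrow> integrable M g \<Longrightarrow>
    ae_eq M (T (\<lambda>x. f x - g x)) (\<lambda>x. T f x - T g x)"
  using lin_lin[of M T f g 1 "-1"] by simp

lemma lin_zero: "lin_op M T \<Longrightarrow> ae_eq M (T (\<lambda>x. 0)) (\<lambda>x. 0)"
  using lin_lin[of M T "\<lambda>x. 0" "\<lambda>x. 0" 0 0] by simp

lemma lin_zero_ae: "lin_op M T \<Longrightarrow> integrable M f \<Longrightarrow> (AE x in M. f x = 0) \<Longrightarrow> AE x in M. T f x = 0"
  using lin_cong[of M T f "\<lambda>x. 0"] lin_zero[of M T]
  by (auto simp: ae_eq_def elim: eventually_elim2)

lemma lin_sum: fixes f :: "nat \<Rightarrow> 'a \<Rightarrow> real" shows "lin_op M T \<Longrightarrow> (\<And>k. integrable M (f k)) \<Longrightarrow>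
   ae_eq M (T (\<lambda>x. \<Sum>k<n. f k x)) (\<lambda>x. \<Sum>k<n. T (f k) x)"
proof (induction n)
  case 0 then show ?case using lin_zero[of M T] by simp
next
  case (Suc n)
  have "ae_eq M (T (\<lambda>x. \<Sum>k<Suc n. f k x)) (\<lambda>x. T (\<lambda>x. \<Sum>k<n. f k x) x + T (f n) x)"
    using lin_add[of M T "\<lambda>x. \<Sum>k<n. f k x" "f n"] Suc by simp
  then show ?case using Suc.IH[OF Suc.prems] unfolding ae_eq_def by (auto elim: eventually_elim2)
qed

lemma contr_diff: "lin_op M T \<Longrightarrow> contraction_op M T \<Longrightarrow> integrable M f \<Longrightarrow> integrable M g \<Longrightarrow>
   l1norm M (\<lambda>x. T f x - T g x) \<le> l1norm M (\<lambda>x. f x - g x)"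
proof -
  assume a: "lin_op M T" "contraction_op M T" "integrable M f" "integrable M g"
  have "l1norm M (\<lambda>x. T f x - T g x) = l1norm M (T (\<lambda>x. f x - g x))"
    using a by (intro l1norm_cong ae_eq_sym[OF lin_diff]) (auto intro: lin_L1)
  also have "\<dots> \<le> l1norm M (\<lambda>x. f x - g x)"
    using a unfolding contraction_op_def L1_def by auto
  finally show ?thesis .
qed

lemma contr_le: "contraction_op M T \<Longrightarrow> integrable M f \<Longrightarrow> l1norm M (T f) \<le> l1norm M f"
  unfolding contraction_op_def L1_def by auto

lemma pos_mono: "lin_op M T \<Longrightarrow> positive_op M T \<Longrightarrow> integrable M f \<Longrightarrow> integrable M g \<Longrightarrow>
    (AE x in M. f x \<le> g x) \<Longrightarrow> AE x in M. T f x \<le> T g x"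
proof -
  assume a: "lin_op M T" "positive_op M T" "integrable M f" "integrable M g" "AE x in M. f x \<le> g x"
  have "AE x in M. 0 \<le> T (\<lambda>x. g x - f x) x"
    using a unfolding positive_op_def L1_def by (auto elim!: eventually_mono)
  moreover have "ae_eq M (T (\<lambda>x. g x - f x)) (\<lambda>x. T g x - T f x)" using a by (intro lin_diff) auto
  ultimately show ?thesis unfolding ae_eq_def by (auto elim: eventually_elim2)
qed

lemma pos_pos: "positive_op M T \<Longrightarrow> integrable M f \<Longrightarrow> (AE x in M. 0 \<le> f x) \<Longrightarrow> AE x in M. 0 \<le> T f x"
  unfolding positive_op_def L1_def by auto

definition good_op where "good_op M T \<longleftrightarrow> lin_op M T \<and> positive_op M T \<and> contraction_op M T"

lemma good_comp:
  assumes "good_op M T" "good_op M U" shows "good_op M (\<lambda>f. T (U f))"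
proof -
  have T: "lin_op M T" "positive_op M T" "contraction_op M T" and U: "lin_op M U" "positive_op M U" "contraction_op M U"
    using assms unfolding good_op_def by auto
  have "lin_op M (\<lambda>f. T (U f))"
    unfolding lin_op_def L1_def
  proof (intro conjI ballI allI impI)
    fix f :: "'a \<Rightarrow> real" assume "f \<in> {f. integrable M f}" then show "T (U f) \<in> {f. integrable M f}"
      using lin_L1[OF T(1) lin_L1[OF U(1)]] by auto
  next
    fix f g :: "'a \<Rightarrow> real" assume "f \<in> {f. integrable M f}" "g \<in> {f. integrable M f}" "ae_eq M f g"
    then show "ae_eq M (T (U f)) (T (U g))"
      using lin_cong[OF T(1) lin_L1[OF U(1)] lin_L1[OF U(1)] lin_cong[OF U(1)]] by auto
  next
    fix f g :: "'a \<Rightarrow> real" and a b :: real assume fg: "f \<in> {f. integrable M f}" "g \<in> {f. integrable M f}"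
    have i: "integrable M f" "integrable M g" "integrable M (U f)" "integrable M (U g)"
      using fg lin_L1[OF U(1)] by auto
    have "ae_eq M (T (U (\<lambda>x. a * f x + b * g x))) (T (\<lambda>x. a * U f x + b * U g x))"
    proof (rule lin_cong[OF T(1)])
      have "integrable M (\<lambda>x. a * f x + b * g x)" using i by simp
      then show "integrable M (U (\<lambda>x. a * f x + b * g x))" by (rule lin_L1[OF U(1)])
      show "integrable M (\<lambda>x. a * U f x + b * U g x)" using i by simp
      show "ae_eq M (U (\<lambda>x. a * f x + b * g x)) (\<lambda>x. a * U f x + b * U g x)" by (rule lin_lin[OF U(1) i(1,2)])
    qed
    moreover have "ae_eq M (T (\<lambda>x. a * U f x + b * U g x)) (\<lambda>x. a * T (U f) x + b * T (U g) x)"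
      by (rule lin_lin[OF T(1) i(3,4)])
    ultimately show "ae_eq M (T (U (\<lambda>x. a * f x + b * g x))) (\<lambda>x. a * T (U f) x + b * T (U g) x)"
      by (rule ae_eq_trans)
  qed
  moreover have "positive_op M (\<lambda>f. T (U f))"
    unfolding positive_op_def L1_def
  proof (intro ballI impI)
    fix u :: "'a \<Rightarrow> real" assume "u \<in> {f. integrable M f}" "AE x in M. 0 \<le> u x"
    then show "AE x in M. 0 \<le> T (U u) x"
      using pos_pos[OF T(2) lin_L1[OF U(1)] pos_pos[OF U(2)]] by auto
  qed
  moreover have "contraction_op M (\<lambda>f. T (U f))"
    unfolding contraction_op_def L1_def
  proof (intro ballI)
    fix u :: "'a \<Rightarrow> real" assume "u \<in> {f. integrable M f}"
    then show "l1norm M (T (U u)) \<le> l1norm M u"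
      using contr_le[OF T(3) lin_L1[OF U(1)], of u] contr_le[OF U(3), of u] by auto
  qed
  ultimately show ?thesis unfolding good_op_def by auto
qed

lemma good_id: "good_op M (\<lambda>f. f)"
  unfolding good_op_def lin_op_def positive_op_def contraction_op_def by (auto simp: ae_eq_def)

lemma good_pow: fixes T :: "('a \<Rightarrow> real) \<Rightarrow> ('a \<Rightarrow> real)" shows "good_op M T \<Longrightarrow> good_op M (T ^^ n)"
proof (induction n)
  case 0 then show ?case using good_id by (simp add: id_def)
next
  case (Suc n) then show ?case using good_comp[of M T "T^^n"] by (simp add: o_def)
qed



declare l1norm_nonneg[simp]

lemma l1_series_ae:
  fixes f :: "nat \<Rightarrow> 'a \<Rightarrow> real"
  assumes int: "\<And>i. integrable M (f i)" and sm: "summable (\<lambda>i. l1norm M (f i))"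
  shows "AE x in M. summable (\<lambda>i. \<bar>f i x\<bar>)"
proof -
  have "(\<integral>\<^sup>+x. (\<Sum>i. ennreal \<bar>f i x\<bar>) \<partial>M) = (\<Sum>i. \<integral>\<^sup>+x. ennreal \<bar>f i x\<bar> \<partial>M)"
    using int by (intro nn_integral_suminf) auto
  also have "\<dots> = (\<Sum>i. ennreal (l1norm M (f i)))"
    unfolding l1norm_def using int
    by (intro arg_cong[where f=suminf] ext nn_integral_eq_integral) auto
  also have "\<dots> < \<infinity>"
    using ennreal_suminf_neq_top[OF sm l1norm_nonneg] by (simp add: less_top[symmetric])
  finally have "AE x in M. (\<Sum>i. ennreal \<bar>f i x\<bar>) < \<infinity>"
    using int by (intro finite_nn_integral_imp_ae_finite) auto
  then show ?thesis
    by (rule eventually_mono) (intro summable_suminf_not_top, auto)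
qed

lemma l1_series:
  fixes f :: "nat \<Rightarrow> 'a \<Rightarrow> real"
  assumes int: "\<And>i. integrable M (f i)" and sm: "summable (\<lambda>i. l1norm M (f i))"
  shows "integrable M (\<lambda>x. \<Sum>i. f i x)"
    and "l1norm M (\<lambda>x. \<Sum>i. f i x) \<le> (\<Sum>i. l1norm M (f i))"
proof -
  note ae = l1_series_ae[OF int sm]
  have sm': "summable (\<lambda>i. \<integral>x. norm (f i x) \<partial>M)" using sm unfolding l1norm_def by simp
  show I: "integrable M (\<lambda>x. \<Sum>i. f i x)"
    by (rule integrable_suminf[OF int]) (use ae sm' in auto)
  have "l1norm M (\<lambda>x. \<Sum>i. f i x) \<le> (\<integral>x. (\<Sum>i. \<bar>f i x\<bar>) \<partial>M)"
    unfolding l1norm_def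
  proof (rule integral_mono_AE)
    show "integrable M (\<lambda>x. \<bar>\<Sum>i. f i x\<bar>)" using I by auto
    show "integrable M (\<lambda>x. \<Sum>i. \<bar>f i x\<bar>)"
      by (rule integrable_suminf) (use int ae sm' in auto)
    show "AE x in M. \<bar>\<Sum>i. f i x\<bar> \<le> (\<Sum>i. \<bar>f i x\<bar>)"
      using ae by (rule eventually_mono) (rule summable_rabs)
  qed
  also have "\<dots> = (\<Sum>i. l1norm M (f i))"
    unfolding l1norm_def by (rule integral_suminf) (use int ae sm' in auto)
  finally show "l1norm M (\<lambda>x. \<Sum>i. f i x) \<le> (\<Sum>i. l1norm M (f i))" .
qed

lemma l1_series_tail:
  fixes f :: "nat \<Rightarrow> 'a \<Rightarrow> real"
  assumes int: "\<And>i. integrable M (f i)" and sm: "summable (\<lambda>i. l1norm M (f i))"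
  shows "(\<lambda>n. l1norm M (\<lambda>x. (\<Sum>i<n. f i x) - (\<Sum>i. f i x))) \<longlonglongrightarrow> 0"
proof -
  note ae = l1_series_ae[OF int sm]
  have smn: "summable (\<lambda>i. l1norm M (f (i + n)))" for n
    using sm by (subst summable_iff_shift) 
  have le: "l1norm M (\<lambda>x. (\<Sum>i<n. f i x) - (\<Sum>i. f i x)) \<le> (\<Sum>i. l1norm M (f (i + n)))" for n
  proof -
    have "l1norm M (\<lambda>x. (\<Sum>i<n. f i x) - (\<Sum>i. f i x)) = l1norm M (\<lambda>x. - (\<Sum>i. f (i + n) x))"
    proof (rule l1norm_cong)
      show "integrable M (\<lambda>x. (\<Sum>i<n. f i x) - (\<Sum>i. f i x))"
        using int l1_series(1)[OF int sm] by auto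
      show "integrable M (\<lambda>x. - (\<Sum>i. f (i + n) x))"
        using l1_series(1)[OF int smn] int by auto
      show "ae_eq M (\<lambda>x. (\<Sum>i<n. f i x) - (\<Sum>i. f i x)) (\<lambda>x. - (\<Sum>i. f (i + n) x))"
        unfolding ae_eq_def using ae
      proof (rule eventually_mono)
        fix x assume "summable (\<lambda>i. \<bar>f i x\<bar>)"
        then have "summable (\<lambda>i. f i x)" by (rule summable_rabs_cancel)
        then show "(\<Sum>i<n. f i x) - (\<Sum>i. f i x) = - (\<Sum>i. f (i + n) x)"
          using suminf_split_initial_segment[of "\<lambda>i. f i x" n] by simp
      qed
    qed
    also have "\<dots> \<le> (\<Sum>i. l1norm M (f (i + n)))"
      using l1_series(2)[OF int smn] by (simp add: l1norm_minus)
    finally show ?thesis .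
  qed
  have "(\<lambda>n. \<Sum>i. l1norm M (f (i + n))) \<longlonglongrightarrow> 0" by (rule suminf_exist_split2[OF sm])
  then show ?thesis
    by (rule tendsto_sandwich[rotated 2, OF tendsto_const]) (use le in auto)
qed

lemma l1_complete:
  fixes f :: "nat \<Rightarrow> 'a \<Rightarrow> real"
  assumes int: "\<And>n. integrable M (f n)"
    and C: "\<And>e. e > 0 \<Longrightarrow> \<exists>N. \<forall>m\<ge>N. \<forall>n\<ge>N. l1norm M (\<lambda>x. f m x - f n x) < e"
  shows "\<exists>F. integrable M F \<and> (\<lambda>n. l1norm M (\<lambda>x. f n x - F x)) \<longlonglongrightarrow> 0"
proof -
  have "\<exists>r. \<forall>n. (\<forall>m\<ge>r n. \<forall>k\<ge>r n. l1norm M (\<lambda>x. f m x - f k x) < (1/2)^n) \<and> r n < r (Suc n)"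
  proof (rule dependent_nat_choice)
    show "\<exists>x. \<forall>m\<ge>x. \<forall>k\<ge>x. l1norm M (\<lambda>x. f m x - f k x) < (1/2)^0" using C[of 1] by simp
  next
    fix x n assume "\<forall>m\<ge>x. \<forall>k\<ge>x. l1norm M (\<lambda>x. f m x - f k x) < (1/2)^n"
    obtain N where N: "\<forall>m\<ge>N. \<forall>k\<ge>N. l1norm M (\<lambda>x. f m x - f k x) < (1/2)^Suc n"
      using C[of "(1/2)^Suc n"] by auto
    show "\<exists>y. (\<forall>m\<ge>y. \<forall>k\<ge>y. l1norm M (\<lambda>x. f m x - f k x) < (1/2)^Suc n) \<and> x < y"
      by (rule exI[of _ "max N (Suc x)"]) (use N in auto)
  qed
  then obtain r where r: "\<And>n m k. m \<ge> r n \<Longrightarrow> k \<ge> r n \<Longrightarrow> l1norm M (\<lambda>x. f m x - f k x) < (1/2)^n"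
    and rs: "\<And>n. r n < r (Suc n)" by blast
  have smono: "strict_mono r" using rs by (simp add: strict_mono_Suc_iff)
  define d where "d k x = f (r (Suc k)) x - f (r k) x" for k x
  have dint: "integrable M (d k)" for k unfolding d_def using int by auto
  have dn: "l1norm M (d k) \<le> (1/2)^k" for k
    unfolding d_def using r[of k "r (Suc k)" "r k"] rs[of k] by auto
  have dsm: "summable (\<lambda>k. l1norm M (d k))"
    by (rule summable_comparison_test[of _ "\<lambda>k. (1/2::real)^k"]) (use dn in auto)
  define F where "F x = f (r 0) x + (\<Sum>k. d k x)" for x
  have FI: "integrable M F" unfolding F_def using l1_series(1)[OF dint dsm] int by auto
  have tel: "(\<Sum>k<n. d k x) = f (r n) x - f (r 0) x" for n x
    unfolding d_def by (rule sum_lessThan_telescope)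
  have sub: "(\<lambda>n. l1norm M (\<lambda>x. f (r n) x - F x)) \<longlonglongrightarrow> 0"
    using l1_series_tail[OF dint dsm] unfolding F_def tel by (simp add: algebra_simps)
  have "(\<lambda>n. l1norm M (\<lambda>x. f n x - F x)) \<longlonglongrightarrow> 0"
  proof (rule LIMSEQ_I)
    fix e :: real assume e: "0 < e"
    obtain N where N: "\<forall>m\<ge>N. \<forall>n\<ge>N. l1norm M (\<lambda>x. f m x - f n x) < e/2" using C[of "e/2"] e by auto
    obtain n0 where n0: "\<forall>n\<ge>n0. norm (l1norm M (\<lambda>x. f (r n) x - F x) - 0) < e/2"
      using LIMSEQ_D[OF sub, of "e/2"] e by auto
    show "\<exists>no. \<forall>n\<ge>no. norm (l1norm M (\<lambda>x. f n x - F x) - 0) < e"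
    proof (intro exI allI impI)
      fix m assume m: "N \<le> m"
      define n where "n = max n0 N"
      have "r n \<ge> n" using smono by (rule seq_suble)
      then have rn: "r n \<ge> N" unfolding n_def by auto
      have "l1norm M (\<lambda>x. f m x - F x) \<le> l1norm M (\<lambda>x. f m x - f (r n) x) + l1norm M (\<lambda>x. f (r n) x - F x)"
        by (rule l1norm_tri) (use int FI in auto)
      also have "\<dots> < e/2 + e/2"
        using N[rule_format, OF m rn] n0[rule_format, of n] unfolding n_def by (auto simp: l1norm_nonneg)
      finally show "norm (l1norm M (\<lambda>x. f m x - F x) - 0) < e" using l1norm_nonneg[of M] by simp
    qed
  qed
  then show ?thesis using FI by auto
qed



lemma l1norm_sum:
  fixes f :: "nat \<Rightarrow> 'a \<Rightarrow> real"
  assumes "\<And>k. integrable M (f k)"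
  shows "l1norm M (\<lambda>x. \<Sum>k<n. f k x) \<le> (\<Sum>k<n. l1norm M (f k))"
proof (induction n)
  case 0 then show ?case by (simp add: l1norm_def)
next
  case (Suc n)
  have "l1norm M (\<lambda>x. \<Sum>k<Suc n. f k x) \<le> l1norm M (\<lambda>x. \<Sum>k<n. f k x) + l1norm M (f n)"
    using l1norm_add[of M "\<lambda>x. \<Sum>k<n. f k x" "f n"] assms by simp
  then show ?case using Suc by simp
qed

locale csg =
  fixes M :: "'a measure" and S :: "real \<Rightarrow> ('a \<Rightarrow> real) \<Rightarrow> ('a \<Rightarrow> real)"
    and D :: "('a \<Rightarrow> real) set" and A :: "('a \<Rightarrow> real) \<Rightarrow> ('a \<Rightarrow> real)" and lam :: real
  assumes C0: "C0_semigroup M S" and pc: "\<forall>t\<ge>0. positive_op M (S t) \<and> contraction_op M (S t)"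
    and gen: "is_generator M S D A" and lam: "lam > 0"
begin

lemma Slin: "t \<ge> 0 \<Longrightarrow> lin_op M (S t)" using C0 unfolding C0_semigroup_def by auto
lemma Sgood: "t \<ge> 0 \<Longrightarrow> good_op M (S t)" using pc Slin unfolding good_op_def by auto
lemma Scontr: "t \<ge> 0 \<Longrightarrow> contraction_op M (S t)" using pc by auto
lemma SL1: "t \<ge> 0 \<Longrightarrow> integrable M f \<Longrightarrow> integrable M (S t f)" using Slin lin_L1 by blast
lemma S0: "integrable M f \<Longrightarrow> ae_eq M (S 0 f) f" using C0 unfolding C0_semigroup_def L1_def by auto
lemma Ssg: "s \<ge> 0 \<Longrightarrow> t \<ge> 0 \<Longrightarrow> integrable M f \<Longrightarrow> ae_eq M (S (s + t) f) (S s (S t f))"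
  using C0 unfolding C0_semigroup_def L1_def by auto
lemma Scont: "integrable M f \<Longrightarrow> t0 \<ge> 0 \<Longrightarrow>
   ((\<lambda>t. l1norm M (\<lambda>x. S t f x - S t0 f x)) \<longlongrightarrow> 0) (at t0 within {0..})"
  using C0 unfolding C0_semigroup_def L1_def by auto
lemma Sdiff: "t \<ge> 0 \<Longrightarrow> integrable M f \<Longrightarrow> integrable M g \<Longrightarrow>
   l1norm M (\<lambda>x. S t f x - S t g x) \<le> l1norm M (\<lambda>x. f x - g x)"
  using contr_diff Slin Scontr by blast
lemma Snorm: "t \<ge> 0 \<Longrightarrow> integrable M f \<Longrightarrow> l1norm M (S t f) \<le> l1norm M f"
  using contr_le Scontr by blast

lemma D_def': "D = {f. integrable M f \<and> (\<exists>g. integrable M g \<and>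
            ((\<lambda>h. l1norm M (\<lambda>x. (S h f x - f x) / h - g x)) \<longlongrightarrow> 0) (at_right 0))}"
  using gen unfolding is_generator_def L1_def by auto
lemma A_lim: "f \<in> D \<Longrightarrow> integrable M (A f) \<and>
            ((\<lambda>h. l1norm M (\<lambda>x. (S h f x - f x) / h - A f x)) \<longlongrightarrow> 0) (at_right 0)"
  using gen unfolding is_generator_def L1_def by auto

lemma Spow_good: "t \<ge> 0 \<Longrightarrow> good_op M (S t ^^ n)" using good_pow Sgood by blast

lemma Spow_sg:
  assumes d: "d \<ge> 0" and f: "integrable M f"
  shows "ae_eq M ((S d ^^ n) f) (S (real n * d) f)"
proof (induction n)
  case 0 then show ?case using ae_eq_sym[OF S0[OF f]] by simp
next
  case (Suc n)
  have i1: "integrable M ((S d ^^ n) f)" using Spow_good[OF d] f lin_L1 unfolding good_op_def by blast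
  have "ae_eq M ((S d ^^ Suc n) f) (S d (S (real n * d) f))"
    using lin_cong[OF Slin[OF d] i1 SL1[OF _ f] Suc.IH] d by simp
  moreover have "ae_eq M (S (d + real n * d) f) (S d (S (real n * d) f))"
    by (rule Ssg) (use d f in auto)
  ultimately show ?case
    by (metis ae_eq_sym ae_eq_trans add.commute distrib_left mult.commute mult.right_neutral of_nat_Suc)
qed

end


lemma ae_sum:
  fixes f g :: "nat \<Rightarrow> 'a \<Rightarrow> real"
  assumes "\<And>k. ae_eq M (f k) (g k)"
  shows "ae_eq M (\<lambda>x. \<Sum>k<n. f k x) (\<lambda>x. \<Sum>k<n. g k x)"
proof -
  have "AE x in M. \<forall>k. f k x = g k x" using assms unfolding ae_eq_def by (simp add: AE_all_countable)
  then show ?thesis unfolding ae_eq_def by (rule eventually_mono) simp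
qed

context csg begin

definition trm :: "real \<Rightarrow> ('a \<Rightarrow> real) \<Rightarrow> nat \<Rightarrow> 'a \<Rightarrow> real" where
  "trm d w k x = d * exp (- lam * d) ^ k * (S d ^^ k) w x"

definition Uf :: "real \<Rightarrow> ('a \<Rightarrow> real) \<Rightarrow> 'a \<Rightarrow> real" where
  "Uf d w x = (\<Sum>k. trm d w k x)"

lemma Spow_L1: "d \<ge> 0 \<Longrightarrow> integrable M f \<Longrightarrow> integrable M ((S d ^^ k) f)"
  using Spow_good lin_L1 unfolding good_op_def by blast

lemma Spow_lin: "d \<ge> 0 \<Longrightarrow> lin_op M (S d ^^ k)"
  using Spow_good unfolding good_op_def by blast

lemma Spow_norm: "d \<ge> 0 \<Longrightarrow> integrable M f \<Longrightarrow> l1norm M ((S d ^^ k) f) \<le> l1norm M f"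
  using Spow_good contr_le unfolding good_op_def by blast

lemma trm_int: "d \<ge> 0 \<Longrightarrow> integrable M w \<Longrightarrow> integrable M (trm d w k)"
  unfolding trm_def[abs_def] using Spow_L1 by auto

lemma trm_norm: "d \<ge> 0 \<Longrightarrow> integrable M w \<Longrightarrow> l1norm M (trm d w k) \<le> d * exp (- lam * d) ^ k * l1norm M w"
proof -
  assume a: "d \<ge> 0" "integrable M w"
  have "l1norm M (trm d w k) = \<bar>d * exp (- lam * d) ^ k\<bar> * l1norm M ((S d ^^ k) w)"
    unfolding trm_def[abs_def] by (rule l1norm_scale)
  also have "\<dots> \<le> \<bar>d * exp (- lam * d) ^ k\<bar> * l1norm M w"
    using Spow_norm[OF a] by (intro mult_left_mono) auto
  finally show ?thesis using a by simp
qed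

lemma trm_summable: "d > 0 \<Longrightarrow> integrable M w \<Longrightarrow> summable (\<lambda>k. l1norm M (trm d w k))"
proof -
  assume a: "d > 0" "integrable M w"
  have q: "exp (- lam * d) < 1" using a lam by (simp add: mult_pos_pos)
  have "summable (\<lambda>k. d * l1norm M w * exp (- lam * d) ^ k)"
    by (rule summable_mult) (use q in \<open>auto intro: summable_geometric\<close>)
  then show ?thesis
    by (rule summable_comparison_test[rotated]) (use trm_norm[of d w] a in \<open>auto simp: algebra_simps\<close>)
qed

lemma Uf_int: "d > 0 \<Longrightarrow> integrable M w \<Longrightarrow> integrable M (Uf d w)"
  unfolding Uf_def[abs_def] using l1_series(1)[OF trm_int trm_summable] by auto

lemma Uf_tail: "d > 0 \<Longrightarrow> integrable M w \<Longrightarrow>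
   (\<lambda>n. l1norm M (\<lambda>x. (\<Sum>k<n. trm d w k x) - Uf d w x)) \<longlonglongrightarrow> 0"
  unfolding Uf_def using l1_series_tail[OF trm_int trm_summable] by auto

lemma Uf_rel:
  assumes d: "d > 0" and w: "integrable M w"
  shows "ae_eq M (Uf d w) (\<lambda>x. d * w x + exp (- lam * d) * S d (Uf d w) x)"
proof -
  let ?e = "exp (- lam * d)"
  define P where "P n x = (\<Sum>k<n. trm d w k x)" for n x
  define Y where "Y n x = d * w x + ?e * S d (P n) x" for n x
  have d0: "d \<ge> 0" using d by simp
  have Pint: "integrable M (P n)" for n unfolding P_def[abs_def] using trm_int[OF d0 w] by auto
  have UI: "integrable M (Uf d w)" by (rule Uf_int[OF d w])
  have YP: "ae_eq M (Y n) (P (Suc n))" for n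
  proof -
    have "ae_eq M (S d (P n)) (\<lambda>x. \<Sum>k<n. S d (trm d w k) x)"
      unfolding P_def by (rule lin_sum[OF Slin[OF d0]]) (rule trm_int[OF d0 w])
    moreover have "ae_eq M (\<lambda>x. \<Sum>k<n. S d (trm d w k) x) (\<lambda>x. \<Sum>k<n. d * ?e ^ k * (S d ^^ Suc k) w x)"
    proof (rule ae_sum)
      fix k
      have "ae_eq M (S d (\<lambda>x. (d * ?e ^ k) * (S d ^^ k) w x)) (\<lambda>x. (d * ?e ^ k) * S d ((S d ^^ k) w) x)"
        by (rule lin_scale[OF Slin[OF d0] Spow_L1[OF d0 w]])
      then show "ae_eq M (S d (trm d w k)) (\<lambda>x. d * ?e ^ k * (S d ^^ Suc k) w x)"
        unfolding trm_def[abs_def] by simp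
    qed
    ultimately have "ae_eq M (S d (P n)) (\<lambda>x. \<Sum>k<n. d * ?e ^ k * (S d ^^ Suc k) w x)"
      by (rule ae_eq_trans)
    then have "ae_eq M (Y n) (\<lambda>x. d * w x + ?e * (\<Sum>k<n. d * ?e ^ k * (S d ^^ Suc k) w x))"
      unfolding Y_def ae_eq_def by (auto elim!: eventually_mono)
    moreover have "(\<lambda>x. d * w x + ?e * (\<Sum>k<n. d * ?e ^ k * (S d ^^ Suc k) w x)) = P (Suc n)"
      unfolding P_def trm_def
      by (rule ext, subst sum.lessThan_Suc_shift) (simp add: sum_distrib_left algebra_simps)
    ultimately show ?thesis by simp
  qed
  have Yint: "integrable M (Y n)" for n unfolding Y_def[abs_def] using w SL1[OF d0 Pint] by auto
  show ?thesis
  proof (rule l1_lim_unique[of sequentially _ _ _ Y])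
    show "integrable M (Uf d w)" by (rule UI)
    show "integrable M (\<lambda>x. d * w x + ?e * S d (Uf d w) x)" using w SL1[OF d0 UI] by auto
    show "\<forall>\<^sub>F n in sequentially. integrable M (Y n)" using Yint by simp
    have "(\<lambda>n. l1norm M (\<lambda>x. P (Suc n) x - Uf d w x)) \<longlonglongrightarrow> 0"
      using LIMSEQ_Suc[OF Uf_tail[OF d w]] unfolding P_def .
    moreover have "l1norm M (\<lambda>x. Y n x - Uf d w x) = l1norm M (\<lambda>x. P (Suc n) x - Uf d w x)" for n
      by (rule l1norm_cong) (use Yint Pint UI YP in \<open>auto simp: ae_eq_def elim!: eventually_mono\<close>)
    ultimately show "(\<lambda>n. l1norm M (\<lambda>x. Y n x - Uf d w x)) \<longlonglongrightarrow> 0" by simp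
    have le: "l1norm M (\<lambda>x. Y n x - (d * w x + ?e * S d (Uf d w) x)) \<le> l1norm M (\<lambda>x. P n x - Uf d w x)" for n
    proof -
      have "l1norm M (\<lambda>x. Y n x - (d * w x + ?e * S d (Uf d w) x)) = l1norm M (\<lambda>x. ?e * (S d (P n) x - S d (Uf d w) x))"
        unfolding Y_def by (simp add: algebra_simps)
      also have "\<dots> = ?e * l1norm M (\<lambda>x. S d (P n) x - S d (Uf d w) x)" by (subst l1norm_scale) simp
      also have "\<dots> \<le> 1 * l1norm M (\<lambda>x. P n x - Uf d w x)"
        using Sdiff[OF d0 Pint UI] lam d by (intro mult_mono) (auto simp: mult_pos_pos)
      finally show ?thesis by simp
    qed
    show "(\<lambda>n. l1norm M (\<lambda>x. Y n x - (d * w x + ?e * S d (Uf d w) x))) \<longlonglongrightarrow> 0"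
      by (rule tendsto_sandwich[rotated 2, OF tendsto_const Uf_tail[OF d w, folded P_def]]) (use le in auto)
  qed simp
qed

lemma Uf_iter:
  assumes d: "d > 0" and w: "integrable M w"
  shows "ae_eq M (Uf d w) (\<lambda>x. d * (\<Sum>j<n. exp (- lam * d) ^ j * (S d ^^ j) w x) + exp (- lam * d) ^ n * (S d ^^ n) (Uf d w) x)"
proof (induction n)
  case 0 then show ?case by (simp add: ae_eq_refl)
next
  case (Suc n)
  let ?e = "exp (- lam * d)"
  have d0: "d \<ge> 0" using d by simp
  have UI: "integrable M (Uf d w)" by (rule Uf_int[OF d w])
  have h1: "ae_eq M ((S d ^^ n) (Uf d w)) ((S d ^^ n) (\<lambda>x. d * w x + ?e * S d (Uf d w) x))"
    by (rule lin_cong[OF Spow_lin[OF d0] UI _ Uf_rel[OF d w]]) (use w SL1[OF d0 UI] in auto)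
  have h2: "ae_eq M ((S d ^^ n) (\<lambda>x. d * w x + ?e * S d (Uf d w) x)) (\<lambda>x. d * (S d ^^ n) w x + ?e * (S d ^^ n) (S d (Uf d w)) x)"
    by (rule lin_lin[OF Spow_lin[OF d0] w SL1[OF d0 UI]])
  have h3: "(S d ^^ n) (S d (Uf d w)) = (S d ^^ Suc n) (Uf d w)" by (simp only: funpow_Suc_right o_apply)
  have "ae_eq M ((S d ^^ n) (Uf d w)) (\<lambda>x. d * (S d ^^ n) w x + ?e * (S d ^^ Suc n) (Uf d w) x)"
    using ae_eq_trans[OF h1 h2] h3 by simp
  with Suc.IH show ?case unfolding ae_eq_def
    by (auto elim!: eventually_elim2 simp: algebra_simps)
qed

end


context csg begin

lemma Cw:
  assumes w: "integrable M w" and eta: "\<eta> > 0"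
  shows "\<exists>h0>0. \<forall>s. 0 \<le> s \<and> s \<le> h0 \<longrightarrow> l1norm M (\<lambda>x. exp (- lam * s) * S s w x - w x) \<le> \<eta>"
proof -
  define f where "f s = l1norm M (\<lambda>x. exp (- lam * s) * S s w x - w x)" for s
  define g where "g s = exp (- lam * s) * l1norm M (\<lambda>x. S s w x - S 0 w x) + \<bar>exp (- lam * s) - 1\<bar> * l1norm M (S 0 w)" for s
  have fg: "f s \<le> g s" if s: "s \<ge> 0" for s
  proof -
    have "f s = l1norm M (\<lambda>x. exp (- lam * s) * S s w x - S 0 w x)"
      unfolding f_def
      by (rule l1norm_cong) (use w SL1[OF s w] SL1[of 0 w] S0[OF w] in \<open>auto simp: ae_eq_def elim!: eventually_mono\<close>)
    also have "\<dots> = l1norm M (\<lambda>x. exp (- lam * s) * (S s w x - S 0 w x) + (exp (- lam * s) - 1) * S 0 w x)"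
      by (simp add: algebra_simps)
    also have "\<dots> \<le> l1norm M (\<lambda>x. exp (- lam * s) * (S s w x - S 0 w x)) + l1norm M (\<lambda>x. (exp (- lam * s) - 1) * S 0 w x)"
      by (rule l1norm_add) (use w SL1[OF s w] SL1[of 0 w] in auto)
    also have "\<dots> = g s" unfolding g_def l1norm_scale by simp
    finally show ?thesis .
  qed
  have "(g \<longlongrightarrow> exp (- lam * 0) * 0 + \<bar>exp (- lam * 0) - 1\<bar> * l1norm M (S 0 w)) (at 0 within {0..})"
    unfolding g_def
    by (intro tendsto_intros Scont[OF w]) auto
  then have g0: "(g \<longlongrightarrow> 0) (at 0 within {0..})" by simp
  have "(f \<longlongrightarrow> 0) (at 0 within {0..})"
  proof (rule tendsto_sandwich[OF _ _ tendsto_const g0])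
    show "\<forall>\<^sub>F s in at 0 within {0..}. 0 \<le> f s" unfolding f_def by simp
    show "\<forall>\<^sub>F s in at 0 within {0..}. f s \<le> g s"
      using fg by (auto simp: eventually_at_filter)
  qed
  then have "\<forall>\<^sub>F s in at 0 within {0..}. f s < \<eta>" using eta by (rule order_tendstoD)
  then obtain d where d: "d > 0" and dd: "\<And>s. s \<in> {0..} \<Longrightarrow> s \<noteq> 0 \<Longrightarrow> dist s 0 < d \<Longrightarrow> f s < \<eta>"
    unfolding eventually_at by auto
  have f0: "f 0 = 0"
  proof -
    have "f 0 = l1norm M (\<lambda>x. S 0 w x - w x)" unfolding f_def by simp
    also have "\<dots> = 0" using S0[OF w] SL1[of 0 w] w
      by (subst l1norm_zero_iff) (auto simp: ae_eq_def elim!: eventually_mono)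
    finally show ?thesis .
  qed
  show ?thesis
  proof (intro exI[of _ "d/2"] conjI allI impI)
    show "0 < d/2" using d by simp
    fix s assume s: "0 \<le> s \<and> s \<le> d / 2"
    show "l1norm M (\<lambda>x. exp (- lam * s) * S s w x - w x) \<le> \<eta>"
    proof (cases "s = 0")
      case True then show ?thesis using f0 eta unfolding f_def by simp
    next
      case False then show ?thesis using dd[of s] s d unfolding f_def by (auto simp: dist_real_def)
    qed
  qed
qed

lemma Est:
  assumes w: "integrable M w" and d: "d > 0"
    and h0: "\<forall>s. 0 \<le> s \<and> s \<le> h0 \<longrightarrow> l1norm M (\<lambda>x. exp (- lam * s) * S s w x - w x) \<le> \<eta>"
    and nd: "real n * d \<le> h0"
  shows "l1norm M (\<lambda>x. d * (\<Sum>j<n. exp (- lam * d) ^ j * (S d ^^ j) w x) - real n * d * w x) \<le> real n * d * \<eta>"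
proof -
  have d0: "d \<ge> 0" using d by simp
  have "l1norm M (\<lambda>x. d * (\<Sum>j<n. exp (- lam * d) ^ j * (S d ^^ j) w x) - real n * d * w x)
      = l1norm M (\<lambda>x. \<Sum>j<n. d * (exp (- lam * d) ^ j * (S d ^^ j) w x - w x))"
    by (simp add: sum_distrib_left sum_subtractf algebra_simps)
  also have "\<dots> \<le> (\<Sum>j<n. l1norm M (\<lambda>x. d * (exp (- lam * d) ^ j * (S d ^^ j) w x - w x)))"
    by (rule l1norm_sum) (use w Spow_L1[OF d0 w] in auto)
  also have "\<dots> \<le> (\<Sum>j<n. d * \<eta>)"
  proof (rule sum_mono)
    fix j assume j: "j \<in> {..<n}"
    have jd: "0 \<le> real j * d \<and> real j * d \<le> h0" using j nd d
      by (auto intro: order_trans[rotated] mult_right_mono)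
    have "l1norm M (\<lambda>x. exp (- lam * d) ^ j * (S d ^^ j) w x - w x)
        = l1norm M (\<lambda>x. exp (- lam * (real j * d)) * S (real j * d) w x - w x)"
    proof (rule l1norm_cong)
      show "integrable M (\<lambda>x. exp (- lam * d) ^ j * (S d ^^ j) w x - w x)" using w Spow_L1[OF d0 w] by auto
      show "integrable M (\<lambda>x. exp (- lam * (real j * d)) * S (real j * d) w x - w x)" using w SL1[of "real j * d" w] d by auto
      have e: "exp (- lam * d) ^ j = exp (- lam * (real j * d))" by (simp add: exp_of_nat_mult[symmetric] algebra_simps)
      show "ae_eq M (\<lambda>x. exp (- lam * d) ^ j * (S d ^^ j) w x - w x) (\<lambda>x. exp (- lam * (real j * d)) * S (real j * d) w x - w x)"
        using Spow_sg[OF d0 w, of j] unfolding ae_eq_def e by (auto elim!: eventually_mono)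
    qed
    also have "\<dots> \<le> \<eta>" using h0 jd by blast
    finally show "l1norm M (\<lambda>x. d * (exp (- lam * d) ^ j * (S d ^^ j) w x - w x)) \<le> d * \<eta>"
      using d by (simp add: l1norm_scale mult_left_mono)
  qed
  also have "\<dots> = real n * d * \<eta>" by simp
  finally show ?thesis .
qed

lemma two_rel:
  assumes X: "integrable M X" and Y: "integrable M Y" and B: "integrable M B" and B': "integrable M B'"
    and h: "h \<ge> 0" and c: "0 \<le> c" "c < 1"
    and rX: "ae_eq M X (\<lambda>x. B x + c * S h X x)" and rY: "ae_eq M Y (\<lambda>x. B' x + c * S h Y x)"
  shows "(1 - c) * l1norm M (\<lambda>x. X x - Y x) \<le> l1norm M (\<lambda>x. B x - B' x)"
proof -
  have "l1norm M (\<lambda>x. X x - Y x) = l1norm M (\<lambda>x. (B x - B' x) + c * (S h X x - S h Y x))"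
    by (rule l1norm_cong) (use X Y B B' SL1[OF h X] SL1[OF h Y] rX rY in \<open>auto simp: ae_eq_def algebra_simps elim: eventually_elim2\<close>)
  also have "\<dots> \<le> l1norm M (\<lambda>x. B x - B' x) + l1norm M (\<lambda>x. c * (S h X x - S h Y x))"
    by (rule l1norm_add) (use X Y B B' SL1[OF h X] SL1[OF h Y] in auto)
  also have "\<dots> \<le> l1norm M (\<lambda>x. B x - B' x) + c * l1norm M (\<lambda>x. X x - Y x)"
    using Sdiff[OF h X Y] c by (simp add: l1norm_scale mult_left_mono)
  finally show ?thesis by (simp add: algebra_simps)
qed

end


lemma exp_arith:
  fixes lam d :: real assumes lam: "lam > 0" and d: "d > 0"
  shows "d \<le> (1/lam + d) * (1 - exp (- lam * d))"
proof -
  have e1: "1 + lam * d \<le> exp (lam * d)" by (rule exp_ge_add_one_self)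
  have pos: "0 < 1 + lam * d" using lam d by (simp add: add_pos_pos mult_pos_pos)
  have "exp (- lam * d) = 1 / exp (lam * d)" by (simp add: exp_minus field_simps)
  also have "\<dots> \<le> 1 / (1 + lam * d)" using e1 pos by (intro divide_left_mono) auto
  finally have e2: "exp (- lam * d) \<le> 1 / (1 + lam * d)" .
  have "(1/lam + d) * (1 - exp (- lam * d)) \<ge> (1/lam + d) * (1 - 1 / (1 + lam * d))"
    using e2 lam d by (intro mult_left_mono) (auto simp: add_pos_pos)
  also have "(1/lam + d) * (1 - 1 / (1 + lam * d)) = d"
  proof -
    have a: "1 - 1/(1+lam*d) = lam*d/(1+lam*d)" using pos by (simp add: field_simps)
    have b: "1/lam + d = (1+lam*d)/lam" using lam by (simp add: field_simps)
    show ?thesis unfolding a b using pos lam by simp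
  qed
  finally show ?thesis by simp
qed

context csg begin

lemma Uf_step:
  assumes w: "integrable M w" and d: "d > 0"
  shows "ae_eq M (Uf d w) (\<lambda>x. d * (\<Sum>j<n. exp (- lam * d) ^ j * (S d ^^ j) w x)
            + exp (- lam * (real n * d)) * S (real n * d) (Uf d w) x)"
proof -
  have d0: "d \<ge> 0" using d by simp
  have e: "exp (- lam * d) ^ n = exp (- lam * (real n * d))" by (simp add: exp_of_nat_mult[symmetric] algebra_simps)
  show ?thesis
    using Uf_iter[OF d w, of n] Spow_sg[OF d0 Uf_int[OF d w], of n] unfolding ae_eq_def e
    by (auto elim: eventually_elim2)
qed

definition Udy :: "('a \<Rightarrow> real) \<Rightarrow> nat \<Rightarrow> 'a \<Rightarrow> real" where
  "Udy w N = Uf ((1/2)^N) w"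

lemma Udy_int: "integrable M w \<Longrightarrow> integrable M (Udy w N)"
  unfolding Udy_def by (rule Uf_int) auto

lemma pow2_split: "N \<le> N' \<Longrightarrow> real (2 ^ (N' - N)) * (1/2::real) ^ N' = (1/2) ^ N"
proof -
  assume "N \<le> N'"
  then obtain k where k: "N' = N + k" by (metis le_add_diff_inverse)
  show ?thesis unfolding k by (simp add: power_add field_simps)
qed

lemma Udy_cauchy:
  assumes w: "integrable M w"
    and h0: "\<forall>s. 0 \<le> s \<and> s \<le> h0 \<longrightarrow> l1norm M (\<lambda>x. exp (- lam * s) * S s w x - w x) \<le> \<eta>"
    and N: "(1/2)^N \<le> h0" and NN: "N \<le> N'" and eta: "\<eta> \<ge> 0"
  shows "l1norm M (\<lambda>x. Udy w N' x - Udy w N x) \<le> \<eta> * (1/lam + 1)"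
proof -
  define d where "d = (1/2::real)^N"
  define d' where "d' = (1/2::real)^N'"
  define n where "n = (2::nat) ^ (N' - N)"
  have nd: "real n * d' = d" unfolding n_def d_def d'_def using pow2_split[OF NN] by simp
  have dpos: "d > 0" "d' > 0" unfolding d_def d'_def by auto
  have d1: "d \<le> 1" unfolding d_def by (simp add: power_le_one)
  define B where "B x = d' * (\<Sum>j<n. exp (- lam * d') ^ j * (S d' ^^ j) w x)" for x
  have BI: "integrable M B" unfolding B_def[abs_def] using w Spow_L1[of d' w] dpos by auto
  have rX: "ae_eq M (Udy w N') (\<lambda>x. B x + exp (- lam * d) * S d (Udy w N') x)"
    using Uf_step[OF w dpos(2), of n] unfolding Udy_def B_def[abs_def] nd d'_def[symmetric] by simp
  have rY: "ae_eq M (Udy w N) (\<lambda>x. d * w x + exp (- lam * d) * S d (Udy w N) x)"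
    using Uf_rel[OF dpos(1) w] unfolding Udy_def d_def by simp
  have EB: "l1norm M (\<lambda>x. B x - d * w x) \<le> d * \<eta>"
    using Est[OF w dpos(2) h0, of n] nd N unfolding B_def d_def by simp
  have c: "0 \<le> exp (- lam * d)" "exp (- lam * d) < 1" using lam dpos by (auto simp: mult_pos_pos)
  have "(1 - exp (- lam * d)) * l1norm M (\<lambda>x. Udy w N' x - Udy w N x) \<le> l1norm M (\<lambda>x. B x - d * w x)"
    by (rule two_rel[OF Udy_int[OF w] Udy_int[OF w] BI _ _ c rX rY]) (use w dpos in auto)
  also have "\<dots> \<le> d * \<eta>" by (rule EB)
  finally have 1: "(1 - exp (- lam * d)) * l1norm M (\<lambda>x. Udy w N' x - Udy w N x) \<le> d * \<eta>" .
  have 2: "d \<le> (1/lam + d) * (1 - exp (- lam * d))" by (rule exp_arith[OF lam dpos(1)])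
  have "d * l1norm M (\<lambda>x. Udy w N' x - Udy w N x) \<le> (1/lam + d) * (1 - exp (- lam * d)) * l1norm M (\<lambda>x. Udy w N' x - Udy w N x)"
    using 2 by (intro mult_right_mono) auto
  also have "\<dots> \<le> (1/lam + d) * (d * \<eta>)"
    using 1 lam dpos by (simp only: mult.assoc) (intro mult_left_mono, auto)
  finally have "d * l1norm M (\<lambda>x. Udy w N' x - Udy w N x) \<le> d * ((1/lam + d) * \<eta>)" by (simp add: algebra_simps)
  then have "l1norm M (\<lambda>x. Udy w N' x - Udy w N x) \<le> (1/lam + d) * \<eta>" using dpos by simp
  also have "\<dots> \<le> (1/lam + 1) * \<eta>" using d1 eta by (intro mult_right_mono) auto
  finally show ?thesis by (simp add: algebra_simps)
qed

lemma Udy_conv: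
  assumes w: "integrable M w"
  shows "\<exists>F. integrable M F \<and> (\<lambda>n. l1norm M (\<lambda>x. Udy w n x - F x)) \<longlonglongrightarrow> 0"
proof (rule l1_complete)
  show "\<And>n. integrable M (Udy w n)" using Udy_int[OF w] .
  fix e :: real assume e: "e > 0"
  define \<eta> where "\<eta> = e / (4 * (1/lam + 1))"
  have eta: "\<eta> > 0" unfolding \<eta>_def using e lam by (simp add: add_pos_pos)
  obtain h0 where h0p: "h0 > 0" and h0: "\<forall>s. 0 \<le> s \<and> s \<le> h0 \<longrightarrow> l1norm M (\<lambda>x. exp (- lam * s) * S s w x - w x) \<le> \<eta>"
    using Cw[OF w eta] by auto
  obtain N where N: "(1/2::real)^N < h0" using real_arch_pow_inv[OF h0p, of "1/2"] by auto
  show "\<exists>N. \<forall>m\<ge>N. \<forall>n\<ge>N. l1norm M (\<lambda>x. Udy w m x - Udy w n x) < e"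
  proof (intro exI allI impI)
    fix m n assume m: "N \<le> m" and n: "N \<le> n"
    have "l1norm M (\<lambda>x. Udy w m x - Udy w n x) \<le> l1norm M (\<lambda>x. Udy w m x - Udy w N x) + l1norm M (\<lambda>x. Udy w N x - Udy w n x)"
      by (rule l1norm_tri) (use Udy_int[OF w] in auto)
    also have "\<dots> \<le> \<eta> * (1/lam + 1) + \<eta> * (1/lam + 1)"
      using Udy_cauchy[OF w h0 _ m] Udy_cauchy[OF w h0 _ n] N eta l1norm_sym[of M "Udy w N" "Udy w n"]
      by (intro add_mono) auto
    also have "\<dots> < e" unfolding \<eta>_def using e lam by (simp add: field_simps add_pos_pos)
    finally show "l1norm M (\<lambda>x. Udy w m x - Udy w n x) < e" .
  qed
qed

end


context csg begin

definition Ul :: "('a \<Rightarrow> real) \<Rightarrow> 'a \<Rightarrow> real" where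
  "Ul w = (SOME F. integrable M F \<and> (\<lambda>n. l1norm M (\<lambda>x. Udy w n x - F x)) \<longlonglongrightarrow> 0)"

lemma Ul: assumes w: "integrable M w"
  shows "integrable M (Ul w) \<and> (\<lambda>n. l1norm M (\<lambda>x. Udy w n x - Ul w x)) \<longlonglongrightarrow> 0"
proof -
  have "\<exists>F. integrable M F \<and> (\<lambda>n. l1norm M (\<lambda>x. Udy w n x - F x)) \<longlonglongrightarrow> 0" by (rule Udy_conv[OF w])
  then show ?thesis unfolding Ul_def by (rule someI_ex)
qed

definition Phi :: "('a \<Rightarrow> real) \<Rightarrow> ('a \<Rightarrow> real) \<Rightarrow> real \<Rightarrow> real" where
  "Phi w X h = l1norm M (\<lambda>x. X x - exp (- lam * h) * S h X x - h * w x)"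

lemma Phi_lip:
  assumes w: "integrable M w" and X: "integrable M X" and Y: "integrable M Y" and h: "h \<ge> 0"
  shows "Phi w X h \<le> Phi w Y h + 2 * l1norm M (\<lambda>x. X x - Y x)"
proof -
  let ?c = "exp (- lam * h)"
  have c: "?c \<le> 1" "0 \<le> ?c" using lam h by auto
  have iS: "integrable M (S h X)" "integrable M (S h Y)" using SL1[OF h X] SL1[OF h Y] .
  have "Phi w X h = l1norm M (\<lambda>x. (Y x - ?c * S h Y x - h * w x) + ((X x - Y x) - ?c * (S h X x - S h Y x)))"
    unfolding Phi_def by (simp add: algebra_simps)
  also have "\<dots> \<le> Phi w Y h + l1norm M (\<lambda>x. (X x - Y x) - ?c * (S h X x - S h Y x))"
    unfolding Phi_def by (rule l1norm_add) (use w X Y iS in auto)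
  also have "l1norm M (\<lambda>x. (X x - Y x) - ?c * (S h X x - S h Y x)) \<le> l1norm M (\<lambda>x. X x - Y x) + l1norm M (\<lambda>x. ?c * (S h X x - S h Y x))"
    by (rule l1norm_diff) (use X Y iS in auto)
  also have "l1norm M (\<lambda>x. ?c * (S h X x - S h Y x)) \<le> l1norm M (\<lambda>x. X x - Y x)"
  proof -
    have "l1norm M (\<lambda>x. ?c * (S h X x - S h Y x)) = ?c * l1norm M (\<lambda>x. S h X x - S h Y x)"
      unfolding l1norm_scale using c by simp
    also have "\<dots> \<le> 1 * l1norm M (\<lambda>x. S h X x - S h Y x)" using c by (intro mult_right_mono) auto
    also have "\<dots> \<le> l1norm M (\<lambda>x. X x - Y x)" using Sdiff[OF h X Y] by simp
    finally show ?thesis .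
  qed
  finally show ?thesis by simp
qed

lemma dyadic_bound:
  assumes w: "integrable M w"
    and h0: "\<forall>s. 0 \<le> s \<and> s \<le> h0 \<longrightarrow> l1norm M (\<lambda>x. exp (- lam * s) * S s w x - w x) \<le> \<eta>"
    and nN: "real n * (1/2)^N \<le> h0"
  shows "Phi w (Ul w) (real n * (1/2)^N) \<le> real n * (1/2)^N * \<eta>"
proof -
  define h where "h = real n * (1/2::real)^N"
  have hpos: "h \<ge> 0" unfolding h_def by simp
  have bnd: "Phi w (Udy w N') h \<le> h * \<eta>" if NN: "N \<le> N'" for N'
  proof -
    define d' where "d' = (1/2::real)^N'"
    define n' where "n' = n * 2 ^ (N' - N)"
    have nd: "real n' * d' = h" unfolding n'_def d'_def h_def using pow2_split[OF NN] by (simp add: algebra_simps)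
    have dpos: "d' > 0" unfolding d'_def by simp
    define B where "B x = d' * (\<Sum>j<n'. exp (- lam * d') ^ j * (S d' ^^ j) w x)" for x
    have BI: "integrable M B" unfolding B_def[abs_def] using w Spow_L1[of d' w] dpos by auto
    have r: "ae_eq M (Udy w N') (\<lambda>x. B x + exp (- lam * h) * S h (Udy w N') x)"
      using Uf_step[OF w dpos, of n'] unfolding Udy_def B_def[abs_def] nd d'_def[symmetric] by simp
    have "Phi w (Udy w N') h = l1norm M (\<lambda>x. B x - h * w x)"
      unfolding Phi_def
      by (rule l1norm_cong) (use r w BI Udy_int[OF w] SL1[OF hpos Udy_int[OF w]] in \<open>auto simp: ae_eq_def elim!: eventually_mono\<close>)
    also have "\<dots> \<le> h * \<eta>"
      using Est[OF w dpos h0, of n'] nd nN unfolding B_def h_def by simp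
    finally show ?thesis .
  qed
  have UI: "integrable M (Ul w)" and Ulim: "(\<lambda>n. l1norm M (\<lambda>x. Udy w n x - Ul w x)) \<longlonglongrightarrow> 0" using Ul[OF w] by auto
  have "(\<lambda>N'. h * \<eta> + 2 * l1norm M (\<lambda>x. Udy w N' x - Ul w x)) \<longlonglongrightarrow> h * \<eta> + 2 * 0"
    by (intro tendsto_intros Ulim)
  moreover have "\<exists>N0. \<forall>N'\<ge>N0. Phi w (Ul w) h \<le> h * \<eta> + 2 * l1norm M (\<lambda>x. Udy w N' x - Ul w x)"
  proof (intro exI[of _ N] allI impI)
    fix N' assume "N \<le> N'"
    have "Phi w (Ul w) h \<le> Phi w (Udy w N') h + 2 * l1norm M (\<lambda>x. Ul w x - Udy w N' x)"
      by (rule Phi_lip[OF w UI Udy_int[OF w] hpos])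
    then show "Phi w (Ul w) h \<le> h * \<eta> + 2 * l1norm M (\<lambda>x. Udy w N' x - Ul w x)"
      using bnd[OF \<open>N \<le> N'\<close>] l1norm_sym[of M "Ul w" "Udy w N'"] by simp
  qed
  ultimately have "Phi w (Ul w) h \<le> h * \<eta> + 2 * 0" by (rule LIMSEQ_le_const)
  then show ?thesis unfolding h_def by simp
qed

end


lemma l1norm_add4:
  assumes "integrable M a" "integrable M b" "integrable M c" "integrable M d"
  shows "l1norm M (\<lambda>x. a x + b x + c x + d x) \<le> l1norm M a + l1norm M b + l1norm M c + l1norm M d"
proof -
  have "l1norm M (\<lambda>x. a x + b x + c x + d x) \<le> l1norm M (\<lambda>x. a x + b x + c x) + l1norm M d"
    using l1norm_add[of M "\<lambda>x. a x + b x + c x" d] assms by auto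
  also have "l1norm M (\<lambda>x. a x + b x + c x) \<le> l1norm M (\<lambda>x. a x + b x) + l1norm M c"
    using l1norm_add[of M "\<lambda>x. a x + b x" c] assms by auto
  also have "l1norm M (\<lambda>x. a x + b x) \<le> l1norm M a + l1norm M b"
    using l1norm_add[of M a b] assms by auto
  finally show ?thesis by simp
qed

lemma l1norm_add3:
  assumes "integrable M a" "integrable M b" "integrable M c"
  shows "l1norm M (\<lambda>x. a x + b x + c x) \<le> l1norm M a + l1norm M b + l1norm M c"
proof -
  have "l1norm M (\<lambda>x. a x + b x + c x) \<le> l1norm M (\<lambda>x. a x + b x) + l1norm M c"
    using l1norm_add[of M "\<lambda>x. a x + b x" c] assms by auto
  also have "l1norm M (\<lambda>x. a x + b x) \<le> l1norm M a + l1norm M b"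
    using l1norm_add[of M a b] assms by auto
  finally show ?thesis by simp
qed

context csg begin

lemma real_bound:
  assumes w: "integrable M w"
    and h0: "\<forall>s. 0 \<le> s \<and> s \<le> h0 \<longrightarrow> l1norm M (\<lambda>x. exp (- lam * s) * S s w x - w x) \<le> \<eta>"
    and eta: "\<eta> \<ge> 0" and h: "0 \<le> h" "h \<le> h0"
  shows "Phi w (Ul w) h \<le> h * \<eta>"
proof -
  define hk where "hk k = real (nat \<lfloor>h * 2^k\<rfloor>) * (1/2::real)^k" for k
  have fl: "real (nat \<lfloor>h * 2^k\<rfloor>) = of_int \<lfloor>h * 2^k\<rfloor>" for k using h by simp
  have hk_le: "hk k \<le> h" for k
  proof -
    have "of_int \<lfloor>h * 2^k\<rfloor> * (1/2::real)^k \<le> (h * 2^k) * (1/2)^k"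
      by (intro mult_right_mono) auto
    then show ?thesis unfolding hk_def fl by (simp add: power_one_over field_simps)
  qed
  have hk_ge: "h - (1/2)^k \<le> hk k" for k
  proof -
    have "(h * 2^k - 1) * (1/2::real)^k \<le> of_int \<lfloor>h * 2^k\<rfloor> * (1/2)^k"
      by (intro mult_right_mono) (linarith, simp)
    then show ?thesis unfolding hk_def fl by (simp add: power_one_over field_simps)
  qed
  have hk0: "0 \<le> hk k" for k unfolding hk_def by simp
  have hkl: "hk \<longlonglongrightarrow> h"
  proof (rule tendsto_sandwich[of "\<lambda>k. h - (1/2)^k" _ _ "\<lambda>k. h"])
    show "\<forall>\<^sub>F n in sequentially. h - (1 / 2) ^ n \<le> hk n" using hk_ge by simp
    show "\<forall>\<^sub>F n in sequentially. hk n \<le> h" using hk_le by simp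
    have "(\<lambda>k. h - (1/2::real)^k) \<longlonglongrightarrow> h - 0" by (intro tendsto_intros) simp
    then show "(\<lambda>k. h - (1/2::real)^k) \<longlonglongrightarrow> h" by simp
  qed simp
  have UI: "integrable M (Ul w)" using Ul[OF w] by auto
  let ?U = "Ul w"
  define r where "r k = exp (- lam * hk k) * l1norm M (\<lambda>x. S (hk k) ?U x - S h ?U x)
        + \<bar>exp (- lam * hk k) - exp (- lam * h)\<bar> * l1norm M (S h ?U) + \<bar>hk k - h\<bar> * l1norm M w" for k
  have ineq: "Phi w ?U h \<le> h * \<eta> + r k" for k
  proof -
    have i1: "integrable M (S (hk k) ?U)" "integrable M (S h ?U)" using SL1[OF hk0 UI] SL1[OF h(1) UI] by auto
    have "Phi w ?U h = l1norm M (\<lambda>x. (?U x - exp (- lam * hk k) * S (hk k) ?U x - hk k * w x)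
        + exp (- lam * hk k) * (S (hk k) ?U x - S h ?U x) + (exp (- lam * hk k) - exp (- lam * h)) * S h ?U x
        + (hk k - h) * w x)"
      unfolding Phi_def by (simp add: algebra_simps)
    also have "\<dots> \<le> Phi w ?U (hk k) + l1norm M (\<lambda>x. exp (- lam * hk k) * (S (hk k) ?U x - S h ?U x))
        + l1norm M (\<lambda>x. (exp (- lam * hk k) - exp (- lam * h)) * S h ?U x) + l1norm M (\<lambda>x. (hk k - h) * w x)"
      unfolding Phi_def by (rule l1norm_add4) (use UI i1 w in auto)
    also have "\<dots> = Phi w ?U (hk k) + r k" unfolding r_def l1norm_scale by simp
    also have "Phi w ?U (hk k) \<le> h * \<eta>"
    proof -
      have "Phi w ?U (hk k) \<le> hk k * \<eta>"
        unfolding hk_def by (rule dyadic_bound[OF w h0]) (use hk_le[of k] h in \<open>auto simp: hk_def\<close>)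
      also have "\<dots> \<le> h * \<eta>" using hk_le eta by (intro mult_right_mono) auto
      finally show ?thesis .
    qed
    finally show ?thesis by simp
  qed
  have cont: "continuous (at h within {0..}) (\<lambda>t. l1norm M (\<lambda>x. S t ?U x - S h ?U x))"
    unfolding continuous_within using Scont[OF UI h(1)] by (simp add: l1norm_def)
  have c1: "(\<lambda>k. l1norm M (\<lambda>x. S (hk k) ?U x - S h ?U x)) \<longlonglongrightarrow> l1norm M (\<lambda>x. S h ?U x - S h ?U x)"
    by (rule continuous_within_tendsto_compose'[OF cont _ hkl]) (use hk0 in auto)
  then have c1': "(\<lambda>k. l1norm M (\<lambda>x. S (hk k) ?U x - S h ?U x)) \<longlonglongrightarrow> 0" by (simp add: l1norm_def)
  have "r \<longlonglongrightarrow> exp (- lam * h) * 0 + \<bar>exp (- lam * h) - exp (- lam * h)\<bar> * l1norm M (S h ?U) + \<bar>h - h\<bar> * l1norm M w"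
    unfolding r_def by (intro tendsto_intros c1' hkl)
  then have "r \<longlonglongrightarrow> 0" by simp
  then have "(\<lambda>k. h * \<eta> + r k) \<longlonglongrightarrow> h * \<eta> + 0" by (intro tendsto_intros)
  then show ?thesis using ineq by (intro LIMSEQ_le_const[of "\<lambda>k. h * \<eta> + r k"]) auto
qed

end


lemma exp_quot_lim: "((\<lambda>h. (exp (lam * h) - 1) / h) \<longlongrightarrow> (lam::real)) (at_right 0)"
proof -
  have "((\<lambda>h. exp (lam * h)) has_real_derivative exp (lam * 0) * lam) (at 0)"
    by (auto intro!: derivative_eq_intros)
  then have "((\<lambda>y. (exp (lam * y) - exp (lam * 0)) / (y - 0)) \<longlongrightarrow> lam) (at 0)"
    unfolding has_field_derivative_iff by simp
  then have "((\<lambda>y. (exp (lam * y) - 1) / y) \<longlongrightarrow> lam) (at 0)" by simp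
  then show ?thesis by (rule tendsto_mono[OF at_le, rotated]) simp
qed

lemma gen_identity:
  fixes u s wv c C h lam :: real
  assumes "c * C = 1" "h > 0"
  shows "(s - u) / h - (lam * u - wv) = ((C - 1) / h - lam) * u - (C - 1) * wv - (C / h) * (u - c * s - h * wv)"
proof -
  have "(C / h) * (c * s) = s / h" using assms by (simp add: field_simps)
  then show ?thesis using assms by (simp add: field_simps)
qed

context csg begin

lemma gen_U:
  assumes w: "integrable M w"
  shows "((\<lambda>h. l1norm M (\<lambda>x. (S h (Ul w) x - Ul w x) / h - (lam * Ul w x - w x))) \<longlongrightarrow> 0) (at_right 0)"
proof -
  let ?U = "Ul w"
  have UI: "integrable M ?U" using Ul[OF w] by auto
  define b where "b h = \<bar>(exp (lam * h) - 1) / h - lam\<bar> * l1norm M ?U + \<bar>exp (lam * h) - 1\<bar> * l1norm M w" for h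
  have key: "l1norm M (\<lambda>x. (S h ?U x - ?U x) / h - (lam * ?U x - w x)) \<le> b h + (exp (lam * h) / h) * Phi w ?U h"
    if h: "h > 0" for h
  proof -
    have cC: "exp (- lam * h) * exp (lam * h) = 1" by (simp add: exp_minus field_simps)
    have "l1norm M (\<lambda>x. (S h ?U x - ?U x) / h - (lam * ?U x - w x))
        = l1norm M (\<lambda>x. ((exp (lam * h) - 1) / h - lam) * ?U x + (- (exp (lam * h) - 1)) * w x
            + (- (exp (lam * h) / h)) * (?U x - exp (- lam * h) * S h ?U x - h * w x))"
      by (rule arg_cong[where f="l1norm M"], rule ext, subst gen_identity[OF cC h]) (simp add: algebra_simps)
    also have "\<dots> \<le> l1norm M (\<lambda>x. ((exp (lam * h) - 1) / h - lam) * ?U x) + l1norm M (\<lambda>x. (- (exp (lam * h) - 1)) * w x)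
        + l1norm M (\<lambda>x. (- (exp (lam * h) / h)) * (?U x - exp (- lam * h) * S h ?U x - h * w x))"
      by (rule l1norm_add3) (use UI w SL1[of h ?U] h in auto)
    also have "\<dots> = b h + (exp (lam * h) / h) * Phi w ?U h"
      unfolding b_def Phi_def l1norm_scale using h by (simp add: abs_minus_commute)
    finally show ?thesis .
  qed
  have bl: "(b \<longlongrightarrow> \<bar>lam - lam\<bar> * l1norm M ?U + \<bar>exp (lam * 0) - 1\<bar> * l1norm M w) (at_right 0)"
    unfolding b_def by (intro tendsto_intros exp_quot_lim)
  then have b0: "(b \<longlongrightarrow> 0) (at_right 0)" by simp
  have C1: "((\<lambda>h. exp (lam * h)) \<longlongrightarrow> exp (lam * 0)) (at_right (0::real))" by (intro tendsto_intros)
  show ?thesis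
    unfolding tendsto_iff
  proof (intro allI impI)
    fix e :: real assume e: "e > 0"
    define \<eta> where "\<eta> = e / 4"
    have eta: "\<eta> > 0" unfolding \<eta>_def using e by simp
    obtain h0 where h0p: "h0 > 0" and h0: "\<forall>s. 0 \<le> s \<and> s \<le> h0 \<longrightarrow> l1norm M (\<lambda>x. exp (- lam * s) * S s w x - w x) \<le> \<eta>"
      using Cw[OF w eta] by auto
    have ev1: "\<forall>\<^sub>F h in at_right 0. b h < e / 2" using order_tendstoD(2)[OF b0, of "e/2"] e by simp
    have ev2: "\<forall>\<^sub>F h in at_right 0. exp (lam * h) < 2" using order_tendstoD(2)[OF C1, of 2] by simp
    have ev3: "\<forall>\<^sub>F h in at_right 0. h < h0" using eventually_at_right_less[of 0] h0p
      unfolding eventually_at_right_field by (auto intro: exI[of _ h0])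
    have ev4: "\<forall>\<^sub>F h in at_right (0::real). 0 < h" by (rule eventually_at_right_less)
    show "\<forall>\<^sub>F h in at_right 0. dist (l1norm M (\<lambda>x. (S h ?U x - ?U x) / h - (lam * ?U x - w x))) 0 < e"
      using ev1 ev2 ev3 ev4
    proof eventually_elim
      case (elim h)
      have P: "Phi w ?U h \<le> h * \<eta>" by (rule real_bound[OF w h0]) (use eta elim in auto)
      have "(exp (lam * h) / h) * Phi w ?U h \<le> (exp (lam * h) / h) * (h * \<eta>)"
        using P elim by (intro mult_left_mono) auto
      also have "\<dots> = exp (lam * h) * \<eta>" using elim by simp
      also have "\<dots> \<le> 2 * \<eta>" using elim eta by (intro mult_right_mono) auto
      finally have "(exp (lam * h) / h) * Phi w ?U h \<le> 2 * \<eta>" .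
      then have "l1norm M (\<lambda>x. (S h ?U x - ?U x) / h - (lam * ?U x - w x)) < e"
        using key[of h] elim unfolding \<eta>_def by linarith
      then show ?case by simp
    qed
  qed
qed

lemma res_exists:
  assumes w: "integrable M w"
  shows "\<exists>u\<in>D. ae_eq M (\<lambda>x. lam * u x - A u x) w"
proof
  let ?U = "Ul w"
  have UI: "integrable M ?U" using Ul[OF w] by auto
  have g: "integrable M (\<lambda>x. lam * ?U x - w x)" using UI w by auto
  show UD: "?U \<in> D" unfolding D_def' using UI g gen_U[OF w] by blast
  have AU: "integrable M (A ?U)" and AL: "((\<lambda>h. l1norm M (\<lambda>x. (S h ?U x - ?U x) / h - A ?U x)) \<longlongrightarrow> 0) (at_right 0)"
    using A_lim[OF UD] by auto
  have "ae_eq M (A ?U) (\<lambda>x. lam * ?U x - w x)"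
    by (rule l1_lim_unique[OF trivial_limit_at_right_real AU g _ AL gen_U[OF w]])
       (use UI SL1[of _ ?U] eventually_at_right_less[of 0] in \<open>auto elim!: eventually_mono\<close>)
  then show "ae_eq M (\<lambda>x. lam * ?U x - A ?U x) w" unfolding ae_eq_def by (auto elim!: eventually_mono)
qed

end


context csg begin

lemma D_int: "f \<in> D \<Longrightarrow> integrable M f" unfolding D_def' by auto

lemma D_lin:
  assumes f: "f \<in> D" and g: "g \<in> D"
  shows "(\<lambda>x. a * f x + b * g x) \<in> D \<and> ae_eq M (A (\<lambda>x. a * f x + b * g x)) (\<lambda>x. a * A f x + b * A g x)"
proof -
  let ?F = "\<lambda>x. a * f x + b * g x"
  let ?G = "\<lambda>x. a * A f x + b * A g x"
  have fi: "integrable M f" and gi: "integrable M g" using f g by (auto simp: D_int)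
  have Fi: "integrable M ?F" using fi gi by auto
  have Af: "integrable M (A f)" "((\<lambda>h. l1norm M (\<lambda>x. (S h f x - f x) / h - A f x)) \<longlongrightarrow> 0) (at_right 0)"
    using A_lim[OF f] by auto
  have Ag: "integrable M (A g)" "((\<lambda>h. l1norm M (\<lambda>x. (S h g x - g x) / h - A g x)) \<longlongrightarrow> 0) (at_right 0)"
    using A_lim[OF g] by auto
  have Gi: "integrable M ?G" using Af Ag by auto
  have eq: "l1norm M (\<lambda>x. (S h ?F x - ?F x) / h - ?G x)
      = l1norm M (\<lambda>x. a * ((S h f x - f x) / h - A f x) + b * ((S h g x - g x) / h - A g x))" if h: "h > 0" for h
  proof (rule l1norm_cong)
    show "integrable M (\<lambda>x. (S h ?F x - ?F x) / h - ?G x)" using SL1[of h ?F] Fi Gi h by auto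
    show "integrable M (\<lambda>x. a * ((S h f x - f x) / h - A f x) + b * ((S h g x - g x) / h - A g x))"
      using SL1[of h f] SL1[of h g] fi gi Af Ag h by auto
    have "ae_eq M (S h ?F) (\<lambda>x. a * S h f x + b * S h g x)" by (rule lin_lin[OF Slin fi gi]) (use h in auto)
    then show "ae_eq M (\<lambda>x. (S h ?F x - ?F x) / h - ?G x) (\<lambda>x. a * ((S h f x - f x) / h - A f x) + b * ((S h g x - g x) / h - A g x))"
      unfolding ae_eq_def by (auto elim!: eventually_mono simp: diff_divide_distrib add_divide_distrib algebra_simps)
  qed
  have le: "l1norm M (\<lambda>x. a * ((S h f x - f x) / h - A f x) + b * ((S h g x - g x) / h - A g x))
     \<le> \<bar>a\<bar> * l1norm M (\<lambda>x. (S h f x - f x) / h - A f x) + \<bar>b\<bar> * l1norm M (\<lambda>x. (S h g x - g x) / h - A g x)" if h: "h > 0" for h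
    using l1norm_add[of M "\<lambda>x. a * ((S h f x - f x) / h - A f x)" "\<lambda>x. b * ((S h g x - g x) / h - A g x)"]
      SL1[of h f] SL1[of h g] fi gi Af Ag h by (auto simp: l1norm_scale)
  have lim: "((\<lambda>h. l1norm M (\<lambda>x. (S h ?F x - ?F x) / h - ?G x)) \<longlongrightarrow> 0) (at_right 0)"
  proof (rule tendsto_sandwich[OF _ _ tendsto_const])
    show "\<forall>\<^sub>F h in at_right 0. 0 \<le> l1norm M (\<lambda>x. (S h ?F x - ?F x) / h - ?G x)" by simp
    show "\<forall>\<^sub>F h in at_right 0. l1norm M (\<lambda>x. (S h ?F x - ?F x) / h - ?G x) \<le>
       \<bar>a\<bar> * l1norm M (\<lambda>x. (S h f x - f x) / h - A f x) + \<bar>b\<bar> * l1norm M (\<lambda>x. (S h g x - g x) / h - A g x)"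
      using eventually_at_right_less[of 0] by (rule eventually_mono) (use eq le in auto)
    have "((\<lambda>h. \<bar>a\<bar> * l1norm M (\<lambda>x. (S h f x - f x) / h - A f x) + \<bar>b\<bar> * l1norm M (\<lambda>x. (S h g x - g x) / h - A g x)) \<longlongrightarrow> \<bar>a\<bar> * 0 + \<bar>b\<bar> * 0) (at_right 0)"
      by (intro tendsto_intros Af Ag)
    then show "((\<lambda>h. \<bar>a\<bar> * l1norm M (\<lambda>x. (S h f x - f x) / h - A f x) + \<bar>b\<bar> * l1norm M (\<lambda>x. (S h g x - g x) / h - A g x)) \<longlongrightarrow> 0) (at_right 0)"
      by simp
  qed
  have FD: "?F \<in> D" unfolding D_def' using Fi Gi lim by blast
  have AF: "integrable M (A ?F)" "((\<lambda>h. l1norm M (\<lambda>x. (S h ?F x - ?F x) / h - A ?F x)) \<longlongrightarrow> 0) (at_right 0)"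
    using A_lim[OF FD] by auto
  have "ae_eq M (A ?F) ?G"
    by (rule l1_lim_unique[OF trivial_limit_at_right_real AF(1) Gi _ AF(2) lim])
       (use Fi SL1[of _ ?F] eventually_at_right_less[of 0] in \<open>auto elim!: eventually_mono\<close>)
  then show ?thesis using FD by auto
qed

lemma D_neg: "f \<in> D \<Longrightarrow> (\<lambda>x. - f x) \<in> D \<and> ae_eq M (A (\<lambda>x. - f x)) (\<lambda>x. - A f x)"
  using D_lin[of f f "-1" 0] by simp

lemma D_diff: "f \<in> D \<Longrightarrow> g \<in> D \<Longrightarrow> (\<lambda>x. f x - g x) \<in> D \<and> ae_eq M (A (\<lambda>x. f x - g x)) (\<lambda>x. A f x - A g x)"
  using D_lin[of f g 1 "-1"] by simp

lemma D_zero: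
  assumes f: "f \<in> D" and z: "AE x in M. f x = 0"
  shows "AE x in M. A f x = 0"
proof -
  have fi: "integrable M f" using f by (rule D_int)
  have Af: "integrable M (A f)" "((\<lambda>h. l1norm M (\<lambda>x. (S h f x - f x) / h - A f x)) \<longlongrightarrow> 0) (at_right 0)"
    using A_lim[OF f] by auto
  have "ae_eq M (A f) (\<lambda>x. 0)"
  proof (rule l1_lim_unique[OF trivial_limit_at_right_real Af(1) _ _ Af(2)])
    show "integrable M (\<lambda>x. 0::real)" by simp
    show "\<forall>\<^sub>F h in at_right 0. integrable M (\<lambda>x. (S h f x - f x) / h)"
      using eventually_at_right_less[of 0] by (rule eventually_mono) (use SL1[of _ f] fi in auto)
    have "\<forall>\<^sub>F h in at_right 0. l1norm M (\<lambda>x. (S h f x - f x) / h - 0) = 0"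
      using eventually_at_right_less[of 0]
    proof (rule eventually_mono)
      fix h :: real assume h: "0 < h"
      have "AE x in M. S h f x = 0" by (rule lin_zero_ae[OF Slin fi z]) (use h in auto)
      then show "l1norm M (\<lambda>x. (S h f x - f x) / h - 0) = 0"
        using z SL1[of h f] fi h by (subst l1norm_zero_iff) (auto elim: eventually_elim2)
    qed
    then show "((\<lambda>h. l1norm M (\<lambda>x. (S h f x - f x) / h - 0)) \<longlongrightarrow> 0) (at_right 0)"
      by (rule tendsto_eventually)
  qed
  then show ?thesis unfolding ae_eq_def .
qed

end


lemma chi_intL:
  fixes f g :: "'a \<Rightarrow> real"
  assumes "integrable M f" "integrable M g"
  shows "integrable M (\<lambda>x. (if f x < 0 then 1 else 0) * g x)"
proof (rule Bochner_Integration.integrable_bound[OF assms(2)])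
  have [measurable]: "f \<in> borel_measurable M" "g \<in> borel_measurable M" using assms by auto
  show "(\<lambda>x. (if f x < 0 then 1 else 0) * g x) \<in> borel_measurable M" by measurable
  show "AE x in M. norm ((if f x < 0 then 1 else 0) * g x) \<le> norm (g x)" by auto
qed

context csg begin

lemma dissip:
  assumes f: "f \<in> D"
  shows "0 \<le> (\<integral>x. (if f x < 0 then 1 else 0) * A f x \<partial>M)"
proof -
  define chi where "chi x = (if f x < 0 then 1 else (0::real))" for x
  have fi: "integrable M f" using f by (rule D_int)
  have Af: "integrable M (A f)" "((\<lambda>h. l1norm M (\<lambda>x. (S h f x - f x) / h - A f x)) \<longlongrightarrow> 0) (at_right 0)"
    using A_lim[OF f] by auto
  define fm where "fm x = max (- f x) 0" for x
  define fp where "fp x = max (f x) 0" for x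
  have fmi: "integrable M fm" unfolding fm_def[abs_def] using fi by (intro integrable_max) auto
  have fpi: "integrable M fp" unfolding fp_def[abs_def] using fi by (intro integrable_max) auto
  have fpm: "(\<lambda>x. fp x - fm x) = f" unfolding fp_def fm_def by (rule ext) auto
  have chi_f: "chi x * f x = - fm x" for x unfolding chi_def fm_def by auto
  have ci: "integrable M (\<lambda>x. chi x * g x)" if "integrable M g" for g
    unfolding chi_def using chi_intL[OF fi that] .
  have pos: "0 \<le> (\<integral>x. chi x * ((S h f x - f x) / h) \<partial>M)" if h: "h > 0" for h
  proof -
    have h0: "h \<ge> 0" using h by simp
    have a: "ae_eq M (S h (\<lambda>x. fp x - fm x)) (\<lambda>x. S h fp x - S h fm x)" by (rule lin_diff[OF Slin[OF h0] fpi fmi])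
    have b: "AE x in M. 0 \<le> S h fp x" "AE x in M. 0 \<le> S h fm x"
      using pos_pos[of M "S h" fp] pos_pos[of M "S h" fm] pc h0 fpi fmi unfolding fp_def fm_def by auto
    have c: "AE x in M. - S h fm x \<le> chi x * S h f x"
      using a b unfolding fpm ae_eq_def
    proof eventually_elim
      case (elim x) then show ?case unfolding chi_def by auto
    qed
    have "(\<integral>x. chi x * S h f x \<partial>M) \<ge> (\<integral>x. - S h fm x \<partial>M)"
      by (rule integral_mono_AE) (use c ci SL1[OF h0 fmi] SL1[OF h0 fi] in auto)
    moreover have "(\<integral>x. S h fm x \<partial>M) \<le> (\<integral>x. fm x \<partial>M)"
    proof -
      have "(\<integral>x. S h fm x \<partial>M) = l1norm M (S h fm)"
        by (rule l1norm_nonneg_eq[symmetric]) (use b SL1[OF h0 fmi] in auto)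
      also have "\<dots> \<le> l1norm M fm" by (rule Snorm[OF h0 fmi])
      also have "\<dots> = (\<integral>x. fm x \<partial>M)" by (rule l1norm_nonneg_eq) (use fmi in \<open>auto simp: fm_def\<close>)
      finally show ?thesis .
    qed
    ultimately have "(\<integral>x. chi x * S h f x \<partial>M) - (\<integral>x. chi x * f x \<partial>M) \<ge> 0"
      unfolding chi_f by simp
    then have "(\<integral>x. chi x * S h f x - chi x * f x \<partial>M) \<ge> 0"
      using ci[OF SL1[OF h0 fi]] ci[OF fi] by simp
    then have "(\<integral>x. (chi x * S h f x - chi x * f x) / h \<partial>M) \<ge> 0"
      using h by simp
    then show ?thesis by (simp add: algebra_simps diff_divide_distrib)
  qed
  define I where "I = (\<integral>x. chi x * A f x \<partial>M)"
  define L where "L h = l1norm M (\<lambda>x. (S h f x - f x) / h - A f x)" for h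
  have diff: "\<bar>(\<integral>x. chi x * ((S h f x - f x) / h) \<partial>M) - I\<bar> \<le> L h" if h: "h > 0" for h
  proof -
    have i1: "integrable M (\<lambda>x. (S h f x - f x) / h)" using SL1[of h f] fi h by auto
    have "(\<integral>x. chi x * ((S h f x - f x) / h) \<partial>M) - I = (\<integral>x. chi x * ((S h f x - f x) / h - A f x) \<partial>M)"
      unfolding I_def using ci[OF i1] ci[OF Af(1)] by (simp add: algebra_simps)
    also have "\<bar>\<dots>\<bar> \<le> l1norm M (\<lambda>x. chi x * ((S h f x - f x) / h - A f x))" by (rule integral_abs_le_l1)
    also have "\<dots> \<le> L h" unfolding L_def
      by (rule l1norm_mono) (use i1 Af(1) ci[of "\<lambda>x. (S h f x - f x) / h - A f x"] in \<open>auto simp: chi_def\<close>)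
    finally show ?thesis .
  qed
  have "((\<lambda>h. (\<integral>x. chi x * ((S h f x - f x) / h) \<partial>M) - I) \<longlongrightarrow> 0) (at_right 0)"
  proof (rule tendsto_sandwich[of "\<lambda>h. - L h" _ _ "L"])
    show "\<forall>\<^sub>F h in at_right 0. - L h \<le> (\<integral>x. chi x * ((S h f x - f x) / h) \<partial>M) - I"
      using eventually_at_right_less[of 0] by (rule eventually_mono) (use diff in force)
    show "\<forall>\<^sub>F h in at_right 0. (\<integral>x. chi x * ((S h f x - f x) / h) \<partial>M) - I \<le> L h"
      using eventually_at_right_less[of 0] by (rule eventually_mono) (use diff in force)
    show "(L \<longlongrightarrow> 0) (at_right 0)" using Af(2) unfolding L_def .
    then show "((\<lambda>h. - L h) \<longlongrightarrow> 0) (at_right 0)" using tendsto_minus[of L 0] by simp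
  qed
  then have "((\<lambda>h. ((\<integral>x. chi x * ((S h f x - f x) / h) \<partial>M) - I) + I) \<longlongrightarrow> 0 + I) (at_right 0)"
    by (intro tendsto_intros)
  then have "((\<lambda>h. (\<integral>x. chi x * ((S h f x - f x) / h) \<partial>M)) \<longlongrightarrow> I) (at_right 0)" by simp
  then have "0 \<le> I"
    by (rule tendsto_lowerbound) (use eventually_at_right_less[of 0] pos in \<open>auto elim!: eventually_mono\<close>)
  then show ?thesis unfolding I_def chi_def .
qed

end


context csg begin

lemma pos_sol:
  assumes u: "u \<in> D" and r: "ae_eq M (\<lambda>x. lam * u x - A u x) w" and w: "integrable M w"
    and wp: "AE x in M. 0 \<le> w x"
  shows "AE x in M. 0 \<le> u x"
proof -
  define chi where "chi x = (if u x < 0 then 1 else (0::real))" for x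
  have ui: "integrable M u" using u by (rule D_int)
  have Au: "integrable M (A u)" using A_lim[OF u] by auto
  define um where "um x = max (- u x) 0" for x
  have umi: "integrable M um" unfolding um_def[abs_def] using ui by (intro integrable_max) auto
  have ci: "integrable M (\<lambda>x. chi x * g x)" if "integrable M g" for g
    unfolding chi_def using chi_intL[OF ui that] .
  have [measurable]: "u \<in> borel_measurable M" "A u \<in> borel_measurable M" "w \<in> borel_measurable M" using ui Au w by auto
  have "(\<integral>x. chi x * (lam * u x - A u x) \<partial>M) = (\<integral>x. chi x * w x \<partial>M)"
    by (rule integral_cong_AE) (use r in \<open>auto simp: ae_eq_def chi_def elim!: eventually_mono\<close>)
  also have "\<dots> \<ge> 0" by (rule integral_nonneg_AE) (use wp in \<open>auto simp: chi_def elim!: eventually_mono\<close>)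
  finally have 1: "0 \<le> (\<integral>x. chi x * (lam * u x - A u x) \<partial>M)" .
  have "(\<integral>x. chi x * (lam * u x - A u x) \<partial>M) = lam * (\<integral>x. chi x * u x \<partial>M) - (\<integral>x. chi x * A u x \<partial>M)"
    using ci[OF ui] ci[OF Au] by (simp add: algebra_simps)
  moreover have "(\<integral>x. chi x * u x \<partial>M) = - (\<integral>x. um x \<partial>M)"
  proof -
    have "(\<lambda>x. chi x * u x) = (\<lambda>x. - um x)" by (rule ext) (auto simp: chi_def um_def)
    then show ?thesis by simp
  qed
  moreover have "0 \<le> (\<integral>x. chi x * A u x \<partial>M)" unfolding chi_def by (rule dissip[OF u])
  ultimately have "lam * (\<integral>x. um x \<partial>M) \<le> 0" using 1 by simp
  then have "(\<integral>x. um x \<partial>M) \<le> 0" using lam by (simp add: mult_le_0_iff)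
  moreover have "(\<integral>x. um x \<partial>M) \<ge> 0" by (rule integral_nonneg_AE) (auto simp: um_def)
  ultimately have "(\<integral>x. um x \<partial>M) = 0" by simp
  then have "AE x in M. um x = 0" using umi by (subst (asm) integral_nonneg_eq_0_iff_AE) (auto simp: um_def)
  then show ?thesis by (rule eventually_mono) (auto simp: um_def)
qed

lemma uniq0:
  assumes u: "u \<in> D" and r: "ae_eq M (\<lambda>x. lam * u x - A u x) (\<lambda>x. 0)"
  shows "AE x in M. u x = 0"
proof -
  have p1: "AE x in M. 0 \<le> u x" by (rule pos_sol[OF u r]) auto
  have n: "(\<lambda>x. - u x) \<in> D" "ae_eq M (A (\<lambda>x. - u x)) (\<lambda>x. - A u x)" using D_neg[OF u] by auto
  have r2: "ae_eq M (\<lambda>x. lam * (- u x) - A (\<lambda>x. - u x) x) (\<lambda>x. 0)"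
    using r n(2) unfolding ae_eq_def by (auto elim: eventually_elim2)
  have p2: "AE x in M. 0 \<le> - u x" by (rule pos_sol[OF n(1) r2]) auto
  show ?thesis using p1 p2 by (auto elim: eventually_elim2)
qed

abbreviation R where "R \<equiv> resolvent M D A lam"

lemma R_prop: assumes w: "integrable M w"
  shows "R w \<in> D \<and> ae_eq M (\<lambda>x. lam * R w x - A (R w) x) w"
proof -
  have "\<exists>u. u \<in> D \<and> ae_eq M (\<lambda>x. lam * u x - A u x) w" using res_exists[OF w] by blast
  then show ?thesis unfolding resolvent_def by (rule someI_ex)
qed

lemma R_D: "integrable M w \<Longrightarrow> R w \<in> D" using R_prop by blast
lemma R_int: "integrable M w \<Longrightarrow> integrable M (R w)" using R_D D_int by blast
lemma R_eq: "integrable M w \<Longrightarrow> ae_eq M (\<lambda>x. lam * R w x - A (R w) x) w" using R_prop by blast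

lemma R_pos: "integrable M w \<Longrightarrow> (AE x in M. 0 \<le> w x) \<Longrightarrow> AE x in M. 0 \<le> R w x"
  using pos_sol R_D R_eq by blast

lemma R_lin:
  assumes f: "integrable M f" and g: "integrable M g"
  shows "ae_eq M (R (\<lambda>x. a * f x + b * g x)) (\<lambda>x. a * R f x + b * R g x)"
proof -
  let ?F = "\<lambda>x. a * f x + b * g x"
  have Fi: "integrable M ?F" using f g by auto
  have G: "(\<lambda>x. a * R f x + b * R g x) \<in> D" "ae_eq M (A (\<lambda>x. a * R f x + b * R g x)) (\<lambda>x. a * A (R f) x + b * A (R g) x)"
    using D_lin[OF R_D[OF f] R_D[OF g], of a b] by auto
  have d: "(\<lambda>x. R ?F x - (a * R f x + b * R g x)) \<in> D"
    "ae_eq M (A (\<lambda>x. R ?F x - (a * R f x + b * R g x))) (\<lambda>x. A (R ?F) x - A (\<lambda>x. a * R f x + b * R g x) x)"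
    using D_diff[OF R_D[OF Fi] G(1)] by auto
  have "ae_eq M (\<lambda>x. lam * (R ?F x - (a * R f x + b * R g x)) - A (\<lambda>x. R ?F x - (a * R f x + b * R g x)) x) (\<lambda>x. 0)"
    using d(2) G(2) R_eq[OF Fi] R_eq[OF f] R_eq[OF g] unfolding ae_eq_def
  proof eventually_elim
    case (elim x) then show ?case by (simp add: algebra_simps)
  qed
  then have "AE x in M. R ?F x - (a * R f x + b * R g x) = 0" by (rule uniq0[OF d(1)])
  then show ?thesis unfolding ae_eq_def by (rule eventually_mono) simp
qed

lemma R_cong:
  assumes f: "integrable M f" and g: "integrable M g" and e: "ae_eq M f g"
  shows "ae_eq M (R f) (R g)"
proof -
  have d: "(\<lambda>x. R f x - R g x) \<in> D" "ae_eq M (A (\<lambda>x. R f x - R g x)) (\<lambda>x. A (R f) x - A (R g) x)"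
    using D_diff[OF R_D[OF f] R_D[OF g]] by auto
  have "ae_eq M (\<lambda>x. lam * (R f x - R g x) - A (\<lambda>x. R f x - R g x) x) (\<lambda>x. 0)"
    using d(2) R_eq[OF f] R_eq[OF g] e unfolding ae_eq_def
  proof eventually_elim
    case (elim x) then show ?case by (simp add: algebra_simps)
  qed
  then have "AE x in M. R f x - R g x = 0" by (rule uniq0[OF d(1)])
  then show ?thesis unfolding ae_eq_def by (rule eventually_mono) simp
qed

lemma R_zero_imp: assumes w: "integrable M w" and z: "AE x in M. R w x = 0"
  shows "AE x in M. w x = 0"
proof -
  have "AE x in M. A (R w) x = 0" by (rule D_zero[OF R_D[OF w] z])
  then show ?thesis using z R_eq[OF w] unfolding ae_eq_def by (auto elim: eventually_elim2)
qed

end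


lemma stoch_lin: "stochastic_op M P \<Longrightarrow> lin_op M P" unfolding stochastic_op_def by auto

lemma stoch_pos_int:
  assumes P: "stochastic_op M P" and f: "integrable M f" and fp: "AE x in M. 0 \<le> f x"
  shows "(AE x in M. 0 \<le> P f x) \<and> integral\<^sup>L M (P f) = integral\<^sup>L M f"
proof -
  have L: "lin_op M P" using P by (rule stoch_lin)
  define c where "c = integral\<^sup>L M f"
  have c0: "c \<ge> 0" unfolding c_def using fp by (rule integral_nonneg_AE)
  show ?thesis
  proof (cases "c = 0")
    case True
    then have z: "AE x in M. f x = 0" using f fp unfolding c_def by (subst (asm) integral_nonneg_eq_0_iff_AE) auto
    have zP: "AE x in M. P f x = 0" by (rule lin_zero_ae[OF L f z])
    have "integral\<^sup>L M (P f) = integral\<^sup>L M (\<lambda>x. 0)"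
      by (rule integral_cong_AE) (use zP lin_L1[OF L f] in \<open>auto elim!: eventually_mono\<close>)
    then show ?thesis using zP True unfolding c_def by (auto elim!: eventually_mono)
  next
    case False
    then have cp: "c > 0" using c0 by simp
    define g where "g x = f x / c" for x
    have gi: "integrable M g" unfolding g_def[abs_def] using f by auto
    have gp: "AE x in M. 0 \<le> g x" using fp cp unfolding g_def by (auto elim!: eventually_mono)
    have gn: "l1norm M g = 1"
    proof -
      have "l1norm M g = integral\<^sup>L M g" by (rule l1norm_nonneg_eq[OF gp]) (use gi in auto)
      also have "\<dots> = c / c" unfolding g_def c_def by simp
      finally show ?thesis using cp by simp
    qed
    have dg: "density M g" unfolding density_def L1_def using gi gp gn by auto
    then have dPg: "density M (P g)" using P unfolding stochastic_op_def by auto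
    then have Pgi: "integrable M (P g)" and Pgp: "AE x in M. 0 \<le> P g x" and Pgn: "l1norm M (P g) = 1"
      unfolding density_def L1_def by auto
    have cg: "(\<lambda>x. c * g x) = f" unfolding g_def using cp by (auto simp: fun_eq_iff)
    have e: "ae_eq M (P f) (\<lambda>x. c * P g x)" using lin_scale[OF L gi, of c] unfolding cg .
    have pos: "AE x in M. 0 \<le> P f x" using e Pgp cp unfolding ae_eq_def by (auto elim: eventually_elim2)
    have "integral\<^sup>L M (P f) = integral\<^sup>L M (\<lambda>x. c * P g x)"
      by (rule integral_cong_AE) (use e lin_L1[OF L f] Pgi in \<open>auto simp: ae_eq_def elim!: eventually_mono\<close>)
    also have "\<dots> = c * integral\<^sup>L M (P g)" by simp
    also have "integral\<^sup>L M (P g) = 1" using l1norm_nonneg_eq[OF Pgp] Pgi Pgn by auto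
    finally show ?thesis using pos unfolding c_def by simp
  qed
qed

lemma posneg:
  fixes f :: "'a \<Rightarrow> real"
  assumes f: "integrable M f"
  shows "integrable M (\<lambda>x. max (f x) 0)" "integrable M (\<lambda>x. max (- f x) 0)"
    "(\<lambda>x. max (f x) 0 - max (- f x) 0) = f"
    "l1norm M f = integral\<^sup>L M (\<lambda>x. max (f x) 0) + integral\<^sup>L M (\<lambda>x. max (- f x) 0)"
proof -
  show i1: "integrable M (\<lambda>x. max (f x) 0)" "integrable M (\<lambda>x. max (- f x) 0)" using f by (auto intro!: integrable_max)
  show "(\<lambda>x. max (f x) 0 - max (- f x) 0) = f" by (rule ext) auto
  have "(\<lambda>x. \<bar>f x\<bar>) = (\<lambda>x. max (f x) 0 + max (- f x) 0)" by (rule ext) auto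
  then show "l1norm M f = integral\<^sup>L M (\<lambda>x. max (f x) 0) + integral\<^sup>L M (\<lambda>x. max (- f x) 0)"
    unfolding l1norm_def using i1 by simp
qed

lemma stoch_int:
  assumes P: "stochastic_op M P" and f: "integrable M f"
  shows "integral\<^sup>L M (P f) = integral\<^sup>L M f"
proof -
  let ?p = "\<lambda>x. max (f x) 0" and ?m = "\<lambda>x. max (- f x) 0"
  note pn = posneg[OF f]
  have L: "lin_op M P" using P by (rule stoch_lin)
  have e: "ae_eq M (P (\<lambda>x. ?p x - ?m x)) (\<lambda>x. P ?p x - P ?m x)" by (rule lin_diff[OF L pn(1,2)])
  have "integral\<^sup>L M (P f) = integral\<^sup>L M (\<lambda>x. P ?p x - P ?m x)"
    by (rule integral_cong_AE) (use e pn(3) lin_L1[OF L f] lin_L1[OF L pn(1)] lin_L1[OF L pn(2)] in \<open>auto simp: ae_eq_def elim!: eventually_mono\<close>)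
  also have "\<dots> = integral\<^sup>L M ?p - integral\<^sup>L M ?m"
    using lin_L1[OF L pn(1)] lin_L1[OF L pn(2)] stoch_pos_int[OF P pn(1)] stoch_pos_int[OF P pn(2)] by simp
  also have "\<dots> = integral\<^sup>L M (\<lambda>x. ?p x - ?m x)"
    by (rule Bochner_Integration.integral_diff[symmetric]) (use pn in auto)
  also have "\<dots> = integral\<^sup>L M f" unfolding pn(3) ..
  finally show ?thesis .
qed

lemma pos_contr:
  assumes L: "lin_op M T" and Pp: "positive_op M T"
    and nn: "\<And>w. integrable M w \<Longrightarrow> (AE x in M. 0 \<le> w x) \<Longrightarrow> l1norm M (T w) \<le> l1norm M w"
  shows "contraction_op M T"
  unfolding contraction_op_def L1_def
proof (intro ballI)
  fix f :: "'a \<Rightarrow> real" assume "f \<in> {f. integrable M f}"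
  then have f: "integrable M f" by simp
  let ?p = "\<lambda>x. max (f x) 0" and ?m = "\<lambda>x. max (- f x) 0"
  note pn = posneg[OF f]
  have e: "ae_eq M (T (\<lambda>x. ?p x - ?m x)) (\<lambda>x. T ?p x - T ?m x)" by (rule lin_diff[OF L pn(1,2)])
  have "l1norm M (T f) = l1norm M (\<lambda>x. T ?p x - T ?m x)"
    by (rule l1norm_cong) (use e pn(3) lin_L1[OF L f] lin_L1[OF L pn(1)] lin_L1[OF L pn(2)] in auto)
  also have "\<dots> \<le> l1norm M (T ?p) + l1norm M (T ?m)" by (rule l1norm_diff) (use lin_L1[OF L pn(1)] lin_L1[OF L pn(2)] in auto)
  also have "\<dots> \<le> l1norm M ?p + l1norm M ?m" by (intro add_mono nn) (use pn in auto)
  also have "\<dots> = l1norm M f"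
  proof -
    have "l1norm M ?p = integral\<^sup>L M ?p" by (rule l1norm_nonneg_eq) (use pn(1) in auto)
    moreover have "l1norm M ?m = integral\<^sup>L M ?m" by (rule l1norm_nonneg_eq) (use pn(2) in auto)
    ultimately show ?thesis using pn(4) by simp
  qed
  finally show "l1norm M (T f) \<le> l1norm M f" .
qed

lemma stoch_good:
  assumes P: "stochastic_op M P" shows "good_op M P"
proof -
  have L: "lin_op M P" using P by (rule stoch_lin)
  have pos: "positive_op M P" unfolding positive_op_def L1_def using stoch_pos_int[OF P] by auto
  have "contraction_op M P"
  proof (rule pos_contr[OF L pos])
    fix w :: "'a \<Rightarrow> real" assume w: "integrable M w" and wp: "AE x in M. 0 \<le> w x"
    have "l1norm M (P w) = integral\<^sup>L M (P w)"
      by (rule l1norm_nonneg_eq) (use stoch_pos_int[OF P w wp] lin_L1[OF L w] in auto)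
    also have "\<dots> = integral\<^sup>L M w" using stoch_pos_int[OF P w wp] by simp
    also have "\<dots> = l1norm M w" by (rule l1norm_nonneg_eq[symmetric]) (use w wp in auto)
    finally show "l1norm M (P w) \<le> l1norm M w" by simp
  qed
  then show ?thesis using L pos unfolding good_op_def by auto
qed

lemma A0_int_zero:
  assumes S0: "stochastic_semigroup M S0" and g: "is_generator M S0 D0 A0" and f: "f \<in> D0"
  shows "integral\<^sup>L M (A0 f) = 0"
proof -
  have fi: "integrable M f" using g f unfolding is_generator_def L1_def by auto
  have Af: "integrable M (A0 f)" "((\<lambda>h. l1norm M (\<lambda>x. (S0 h f x - f x) / h - A0 f x)) \<longlongrightarrow> 0) (at_right 0)"
    using g f unfolding is_generator_def L1_def by auto
  have st: "h \<ge> 0 \<Longrightarrow> stochastic_op M (S0 h)" for h using S0 unfolding stochastic_semigroup_def by auto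
  have le: "\<bar>integral\<^sup>L M (A0 f)\<bar> \<le> l1norm M (\<lambda>x. (S0 h f x - f x) / h - A0 f x)" if h: "h > 0" for h
  proof -
    have si: "integrable M (S0 h f)" using lin_L1[OF stoch_lin[OF st] fi] h by auto
    have "integral\<^sup>L M (\<lambda>x. (S0 h f x - f x) / h) = (integral\<^sup>L M (S0 h f) - integral\<^sup>L M f) / h"
      using si fi by simp
    also have "\<dots> = 0" using stoch_int[OF st fi] h by simp
    finally have z: "integral\<^sup>L M (\<lambda>x. (S0 h f x - f x) / h) = 0" .
    have "integral\<^sup>L M (\<lambda>x. (S0 h f x - f x) / h - A0 f x) = integral\<^sup>L M (\<lambda>x. (S0 h f x - f x) / h) - integral\<^sup>L M (A0 f)"
      by (rule Bochner_Integration.integral_diff) (use si fi Af(1) in auto)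
    then have "\<bar>integral\<^sup>L M (A0 f)\<bar> = \<bar>integral\<^sup>L M (\<lambda>x. (S0 h f x - f x) / h - A0 f x)\<bar>"
      unfolding z by simp
    also have "\<dots> \<le> l1norm M (\<lambda>x. (S0 h f x - f x) / h - A0 f x)" by (rule integral_abs_le_l1)
    finally show ?thesis .
  qed
  have "\<bar>integral\<^sup>L M (A0 f)\<bar> \<le> 0"
    by (rule tendsto_lowerbound[OF Af(2)]) (use eventually_at_right_less[of 0] le in \<open>auto elim!: eventually_mono\<close>)
  then show ?thesis by simp
qed



lemma good_parts:
  assumes "good_op M K"
  shows "lin_op M K" "positive_op M K" "contraction_op M K"
  using assms unfolding good_op_def by auto

lemma main_v:
  fixes K :: "('a \<Rightarrow> real) \<Rightarrow> ('a \<Rightarrow> real)"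
  assumes K: "good_op M K"
    and NF: "\<And>w. integrable M w \<Longrightarrow> (AE x in M. 0 \<le> w x) \<Longrightarrow> ae_eq M (K w) w \<Longrightarrow> AE x in M. w x = 0"
    and v: "integrable M v" and vp: "AE x in M. 0 \<le> v x" and Kv: "AE x in M. K v x \<le> v x"
  shows "(\<lambda>n. l1norm M ((K ^^ n) v)) \<longlonglongrightarrow> 0"
proof -
  define a where "a k = (K ^^ k) v" for k
  have Kn: "good_op M (K ^^ k)" for k by (rule good_pow[OF K])
  note Kp = good_parts[OF K]
  have ai: "integrable M (a k)" for k unfolding a_def using lin_L1[OF good_parts(1)[OF Kn] v] .
  have ap: "AE x in M. 0 \<le> a k x" for k unfolding a_def using pos_pos[OF good_parts(2)[OF Kn] v vp] .
  have aS: "a (Suc k) = K (a k)" for k unfolding a_def by simp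
  have dec: "AE x in M. a (Suc k) x \<le> a k x" for k
  proof -
    have "a (Suc k) = (K ^^ k) (K v)" unfolding a_def by (simp only: funpow_Suc_right o_apply)
    moreover have "AE x in M. (K ^^ k) (K v) x \<le> (K ^^ k) v x"
      by (rule pos_mono[OF good_parts(1,2)[OF Kn] lin_L1[OF Kp(1) v] v Kv])
    ultimately show ?thesis unfolding a_def by simp
  qed
  have dec_all: "AE x in M. \<forall>k. a (Suc k) x \<le> a k x" using dec by (simp add: AE_all_countable)
  have mono_le: "AE x in M. a m x \<le> a k x" if "k \<le> m" for k m
    using dec_all
  proof (rule eventually_mono)
    fix x assume "\<forall>k. a (Suc k) x \<le> a k x"
    then have "antimono_on UNIV (\<lambda>k. a k x)" by (intro decseq_SucI) auto
    then show "a m x \<le> a k x" using decseqD that by blast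
  qed
  define Nn where "Nn k = l1norm M (a k)" for k
  have Nn_int: "Nn k = integral\<^sup>L M (a k)" for k unfolding Nn_def by (rule l1norm_nonneg_eq[OF ap]) (use ai in auto)
  have Ndec: "Nn (Suc k) \<le> Nn k" for k unfolding Nn_def aS by (rule contr_le[OF Kp(3) ai])
  have "antimono_on UNIV Nn" by (rule decseq_SucI) (rule Ndec)
  then obtain Lm where Lm: "Nn \<longlonglongrightarrow> Lm" by (rule decseq_convergent[of _ 0]) (auto simp: Nn_def)
  have dist: "l1norm M (\<lambda>x. a k x - a m x) = Nn k - Nn m" if "k \<le> m" for k m
  proof -
    have "l1norm M (\<lambda>x. a k x - a m x) = integral\<^sup>L M (\<lambda>x. a k x - a m x)"
      by (rule l1norm_nonneg_eq) (use mono_le[OF that] ai in \<open>auto elim!: eventually_mono\<close>)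
    also have "\<dots> = Nn k - Nn m" unfolding Nn_int using ai by simp
    finally show ?thesis .
  qed
  have dist2: "l1norm M (\<lambda>x. a m x - a n x) = \<bar>Nn m - Nn n\<bar>" for m n
  proof (cases "m \<le> n")
    case True then show ?thesis using dist[OF True] Ndec l1norm_nonneg[of M "\<lambda>x. a m x - a n x"] by simp
  next
    case False then have "n \<le> m" by simp
    then show ?thesis using dist[of n m] l1norm_sym[of M "a m" "a n"] l1norm_nonneg[of M "\<lambda>x. a n x - a m x"] by simp
  qed
  have "\<exists>F. integrable M F \<and> (\<lambda>n. l1norm M (\<lambda>x. a n x - F x)) \<longlonglongrightarrow> 0"
  proof (rule l1_complete[OF ai])
    fix e :: real assume e: "e > 0"
    then obtain N where N: "\<forall>n\<ge>N. norm (Nn n - Lm) < e/2" using LIMSEQ_D[OF Lm, of "e/2"] by auto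
    show "\<exists>N. \<forall>m\<ge>N. \<forall>n\<ge>N. l1norm M (\<lambda>x. a m x - a n x) < e"
    proof (intro exI allI impI)
      fix m n assume "N \<le> m" "N \<le> n"
      then have "\<bar>Nn m - Lm\<bar> < e/2" "\<bar>Nn n - Lm\<bar> < e/2" using N by auto
      then show "l1norm M (\<lambda>x. a m x - a n x) < e" unfolding dist2 by linarith
    qed
  qed
  then obtain w where wi: "integrable M w" and wl: "(\<lambda>n. l1norm M (\<lambda>x. a n x - w x)) \<longlonglongrightarrow> 0" by blast
  have wp: "AE x in M. 0 \<le> w x"
  proof -
    have le: "l1norm M (\<lambda>x. max (- w x) 0) \<le> l1norm M (\<lambda>x. a n x - w x)" for n
      by (rule l1norm_mono) (use ai wi ap[of n] in \<open>auto elim!: eventually_mono\<close>)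
    have "l1norm M (\<lambda>x. max (- w x) 0) \<le> 0"
      by (rule LIMSEQ_le_const[OF wl]) (use le in auto)
    then have "AE x in M. max (- w x) 0 = 0"
      using l1norm_zero_iff[of M "\<lambda>x. max (- w x) 0"] wi l1norm_nonneg[of M "\<lambda>x. max (- w x) 0"]
      by (auto intro!: integrable_max)
    then show ?thesis by (rule eventually_mono) auto
  qed
  have "ae_eq M (K w) w"
  proof (rule l1_lim_unique[OF trivial_limit_sequentially lin_L1[OF Kp(1) wi] wi, of "\<lambda>k. a (Suc k)"])
    show "\<forall>\<^sub>F n in sequentially. integrable M (a (Suc n))" using ai by simp
    have "l1norm M (\<lambda>x. a (Suc n) x - K w x) \<le> l1norm M (\<lambda>x. a n x - w x)" for n
      unfolding aS by (rule contr_diff[OF Kp(1,3) ai wi])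
    then show "(\<lambda>n. l1norm M (\<lambda>x. a (Suc n) x - K w x)) \<longlonglongrightarrow> 0"
      by (intro tendsto_sandwich[OF _ _ tendsto_const wl]) auto
    show "(\<lambda>n. l1norm M (\<lambda>x. a (Suc n) x - w x)) \<longlonglongrightarrow> 0" using LIMSEQ_Suc[OF wl] .
  qed
  then have w0: "AE x in M. w x = 0" by (rule NF[OF wi wp])
  have "l1norm M (\<lambda>x. a n x - w x) = l1norm M (a n)" for n
    by (rule l1norm_cong) (use ai wi w0 in \<open>auto simp: ae_eq_def elim!: eventually_mono\<close>)
  then show ?thesis using wl unfolding a_def by simp
qed



lemma clamp_le: "(c::real) \<ge> 0 \<Longrightarrow> \<bar>y - max (- c) (min c y)\<bar> \<le> \<bar>y\<bar>"
  by (auto simp: max_def min_def abs_if)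

lemma main_u:
  fixes K :: "('a \<Rightarrow> real) \<Rightarrow> ('a \<Rightarrow> real)"
  assumes K: "good_op M K"
    and Kv0: "(\<lambda>n. l1norm M ((K ^^ n) v)) \<longlonglongrightarrow> 0"
    and v: "integrable M v" and vp: "AE x in M. 0 < v x" and u: "integrable M u"
  shows "(\<lambda>n. l1norm M ((K ^^ n) u)) \<longlonglongrightarrow> 0"
proof -
  define t where "t m x = max (- (real m * v x)) (min (real m * v x) (u x))" for m x
  have ti: "integrable M (t m)" for m unfolding t_def[abs_def]
    using u v by (intro integrable_max Bochner_Integration.integrable_min) auto
  have [measurable]: "u \<in> borel_measurable M" "v \<in> borel_measurable M" using u v by auto
  have tconv: "(\<lambda>m. l1norm M (\<lambda>x. u x - t m x)) \<longlonglongrightarrow> 0"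
  proof -
    have "(\<lambda>m. integral\<^sup>L M (\<lambda>x. \<bar>u x - t m x\<bar>)) \<longlonglongrightarrow> integral\<^sup>L M (\<lambda>x. 0::real)"
    proof (rule integral_dominated_convergence[where w="\<lambda>x. \<bar>u x\<bar>"])
      show "(\<lambda>x. 0::real) \<in> borel_measurable M" by simp
      show "(\<lambda>x. \<bar>u x - t m x\<bar>) \<in> borel_measurable M" for m unfolding t_def by measurable
      show "integrable M (\<lambda>x. \<bar>u x\<bar>)" using u by simp
      show "AE x in M. (\<lambda>m. \<bar>u x - t m x\<bar>) \<longlonglongrightarrow> 0"
        using vp
      proof (rule eventually_mono)
        fix x assume vx: "0 < v x"
        obtain N :: nat where N: "\<bar>u x\<bar> / v x \<le> real N" using real_arch_simple by blast
        have "\<bar>u x - t m x\<bar> = 0" if "m \<ge> N" for m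
        proof -
          have "\<bar>u x\<bar> / v x \<le> real m" using N that by linarith
          then have "\<bar>u x\<bar> \<le> real m * v x" using vx by (simp add: field_simps)
          then show ?thesis unfolding t_def by auto
        qed
        then show "(\<lambda>m. \<bar>u x - t m x\<bar>) \<longlonglongrightarrow> 0"
          by (intro tendsto_eventually) (auto simp: eventually_sequentially)
      qed
      show "AE x in M. norm \<bar>u x - t m x\<bar> \<le> \<bar>u x\<bar>" for m
        using vp by (rule eventually_mono) (use clamp_le in \<open>auto simp: t_def\<close>)
    qed
    then show ?thesis unfolding l1norm_def by simp
  qed
  note Kp = good_parts[OF K]
  have Kn: "good_op M (K ^^ n)" for n by (rule good_pow[OF K])
  have bound: "l1norm M ((K ^^ n) (t m)) \<le> real m * l1norm M ((K ^^ n) v)" for n m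
  proof -
    note L = good_parts[OF Kn[of n]]
    have mvi: "integrable M (\<lambda>x. real m * v x)" "integrable M (\<lambda>x. - (real m * v x))" using v by auto
    have up: "AE x in M. (K ^^ n) (t m) x \<le> (K ^^ n) (\<lambda>x. real m * v x) x"
      by (rule pos_mono[OF L(1,2) ti mvi(1)]) (use vp in \<open>auto simp: t_def elim!: eventually_mono\<close>)
    have lo: "AE x in M. (K ^^ n) (\<lambda>x. (- real m) * v x) x \<le> (K ^^ n) (t m) x"
      by (rule pos_mono[OF L(1,2) _ ti]) (use v vp in \<open>auto simp: t_def elim!: eventually_mono\<close>)
    have s1: "ae_eq M ((K ^^ n) (\<lambda>x. real m * v x)) (\<lambda>x. real m * (K ^^ n) v x)" by (rule lin_scale[OF L(1) v])
    have s2: "ae_eq M ((K ^^ n) (\<lambda>x. (- real m) * v x)) (\<lambda>x. (- real m) * (K ^^ n) v x)" by (rule lin_scale[OF L(1) v])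
    have vp': "AE x in M. 0 \<le> v x" using vp by (auto elim!: eventually_mono)
    have Kvp: "AE x in M. 0 \<le> (K ^^ n) v x" by (rule pos_pos[OF L(2) v vp'])
    have "AE x in M. \<bar>(K ^^ n) (t m) x\<bar> \<le> \<bar>real m * (K ^^ n) v x\<bar>"
      using up lo s1 s2 Kvp unfolding ae_eq_def
    proof eventually_elim
      case (elim x) then show ?case by (simp add: abs_le_iff)
    qed
    then have "l1norm M ((K ^^ n) (t m)) \<le> l1norm M (\<lambda>x. real m * (K ^^ n) v x)"
      by (intro l1norm_mono) (use lin_L1[OF L(1) ti] lin_L1[OF L(1) v] in auto)
    then show ?thesis by (simp add: l1norm_scale)
  qed
  have tri: "l1norm M ((K ^^ n) u) \<le> l1norm M (\<lambda>x. u x - t m x) + real m * l1norm M ((K ^^ n) v)" for n m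
  proof -
    note L = good_parts[OF Kn[of n]]
    have i1: "integrable M ((K ^^ n) u)" "integrable M ((K ^^ n) (t m))" using lin_L1[OF L(1)] u ti by auto
    have "l1norm M ((K ^^ n) u) = l1norm M (\<lambda>x. ((K ^^ n) u x - (K ^^ n) (t m) x) + (K ^^ n) (t m) x)" by simp
    also have "\<dots> \<le> l1norm M (\<lambda>x. (K ^^ n) u x - (K ^^ n) (t m) x) + l1norm M ((K ^^ n) (t m))"
      by (rule l1norm_add) (use i1 in auto)
    also have "l1norm M (\<lambda>x. (K ^^ n) u x - (K ^^ n) (t m) x) \<le> l1norm M (\<lambda>x. u x - t m x)"
      by (rule contr_diff[OF L(1,3) u ti])
    finally show ?thesis using bound[of n m] by simp
  qed
  show ?thesis
  proof (rule LIMSEQ_I)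
    fix e :: real assume e: "0 < e"
    obtain m where m: "norm (l1norm M (\<lambda>x. u x - t m x) - 0) < e/2" using LIMSEQ_D[OF tconv, of "e/2"] e by auto
    have lm: "(\<lambda>n. real m * l1norm M ((K ^^ n) v)) \<longlonglongrightarrow> real m * 0" by (intro tendsto_intros Kv0)
    obtain N where N: "\<forall>n\<ge>N. norm (real m * l1norm M ((K ^^ n) v) - real m * 0) < e/2"
      using LIMSEQ_D[OF lm, of "e/2"] e by force
    show "\<exists>no. \<forall>n\<ge>no. norm (l1norm M ((K ^^ n) u) - 0) < e"
    proof (intro exI allI impI)
      fix n assume "N \<le> n"
      then have "real m * l1norm M ((K ^^ n) v) < e/2" using N by auto
      then show "norm (l1norm M ((K ^^ n) u) - 0) < e" using tri[of n m] m by simp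
    qed
  qed
qed



theorem theorem3p2:
  fixes M :: "'a measure"
    and S0 S :: "real \<Rightarrow> ('a \<Rightarrow> real) \<Rightarrow> ('a \<Rightarrow> real)"
    and D0 D :: "('a \<Rightarrow> real) set"
    and A0 A P :: "('a \<Rightarrow> real) \<Rightarrow> ('a \<Rightarrow> real)"
    and \<phi> v :: "'a \<Rightarrow> real"
    and lam :: real
  assumes "sigma_finite_measure M"
    and "stochastic_semigroup M S0"
    and "is_generator M S0 D0 A0"
    and "\<phi> \<in> borel_measurable M"
    and "\<forall>x. \<phi> x \<ge> 0"
    and "stochastic_op M P"
    and "D \<subseteq> D0 \<inter> L1_weighted M \<phi>"
    and "\<forall>u\<in>D. ae_eq M (A u) (\<lambda>x. A0 u x - \<phi> x * u x)"
    and "C0_semigroup M S"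
    and "\<forall>t\<ge>0. positive_op M (S t) \<and> contraction_op M (S t)"
    and "is_generator M S D A"
    and "lam > 0"
    and "v \<in> L1 M"
    and "AE x in M. v x > 0"
    and "AE x in M. P (\<lambda>y. \<phi> y * resolvent M D A lam v y) x \<le> v x"
  shows "\<forall>u\<in>L1 M. ((\<lambda>n. l1norm M (((\<lambda>w. P (\<lambda>y. \<phi> y * resolvent M D A lam w y)) ^^ n) u))
            \<longlonglongrightarrow> 0)"
proof -
  note as = assms
  interpret csg M S D A lam
    using assms(9,10,11,12) by unfold_locales auto
  define K where "K w = P (\<lambda>y. \<phi> y * resolvent M D A lam w y)" for w
  have Pg: "good_op M P" by (rule stoch_good[OF assms(6)])
  have PL: "lin_op M P" by (rule stoch_lin[OF assms(6)])
  have phim[measurable]: "\<phi> \<in> borel_measurable M" by (rule assms(4))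
  have phiR: "integrable M (\<lambda>y. \<phi> y * resolvent M D A lam w y)" if w: "integrable M w" for w
  proof -
    have RD: "resolvent M D A lam w \<in> D" by (rule R_D[OF w])
    then have "resolvent M D A lam w \<in> L1_weighted M \<phi>" using assms(7) by auto
    then have fin: "(\<integral>\<^sup>+ x. ennreal (\<phi> x * \<bar>resolvent M D A lam w x\<bar>) \<partial>M) < \<infinity>" unfolding L1_weighted_def by auto
    have [measurable]: "resolvent M D A lam w \<in> borel_measurable M" using R_int[OF w] by auto
    show ?thesis
    proof (rule integrableI_bounded)
      show "(\<lambda>y. \<phi> y * resolvent M D A lam w y) \<in> borel_measurable M" by measurable
      have "(\<lambda>x. ennreal (norm (\<phi> x * resolvent M D A lam w x))) = (\<lambda>x. ennreal (\<phi> x * \<bar>resolvent M D A lam w x\<bar>))"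
        using assms(5) by (auto simp: abs_mult)
      then show "(\<integral>\<^sup>+ x. ennreal (norm (\<phi> x * resolvent M D A lam w x)) \<partial>M) < \<infinity>" using fin by simp
    qed
  qed
  have KL1: "integrable M (K w)" if "integrable M w" for w unfolding K_def using lin_L1[OF PL phiR[OF that]] .
  have Kpos: "AE x in M. 0 \<le> K w x" if w: "integrable M w" and wp: "AE x in M. 0 \<le> w x" for w
  proof -
    have "AE x in M. 0 \<le> \<phi> x * resolvent M D A lam w x" using R_pos[OF w wp] assms(5) by (auto elim!: eventually_mono)
    then show ?thesis unfolding K_def using good_parts(2)[OF Pg] phiR[OF w] unfolding positive_op_def L1_def by auto
  qed
  have Knorm: "l1norm M (K w) = l1norm M w - lam * l1norm M (resolvent M D A lam w)"
    if w: "integrable M w" and wp: "AE x in M. 0 \<le> w x" for w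
  proof -
    let ?u = "resolvent M D A lam w"
    have uD: "?u \<in> D" by (rule R_D[OF w])
    have ui: "integrable M ?u" by (rule R_int[OF w])
    have up: "AE x in M. 0 \<le> ?u x" by (rule R_pos[OF w wp])
    have uD0: "?u \<in> D0" using uD assms(7) by auto
    have A0i: "integrable M (A0 ?u)" using assms(3) uD0 unfolding is_generator_def L1_def by auto
    have A0z: "integral\<^sup>L M (A0 ?u) = 0" by (rule A0_int_zero[OF assms(2,3) uD0])
    have pui: "integrable M (\<lambda>x. \<phi> x * ?u x)" by (rule phiR[OF w])
    have e1: "ae_eq M (A ?u) (\<lambda>x. A0 ?u x - \<phi> x * ?u x)" using assms(8) uD by auto
    have e2: "ae_eq M (\<lambda>x. lam * ?u x - A ?u x) w" by (rule R_eq[OF w])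
    have [measurable]: "w \<in> borel_measurable M" "?u \<in> borel_measurable M" "A0 ?u \<in> borel_measurable M" using w ui A0i by auto
    have "integral\<^sup>L M w = integral\<^sup>L M (\<lambda>x. lam * ?u x - A0 ?u x + \<phi> x * ?u x)"
      by (rule integral_cong_AE) (use e1 e2 in \<open>auto simp: ae_eq_def elim: eventually_elim2\<close>)
    also have "\<dots> = lam * integral\<^sup>L M ?u - integral\<^sup>L M (A0 ?u) + integral\<^sup>L M (\<lambda>x. \<phi> x * ?u x)"
      using ui A0i pui by simp
    finally have I: "integral\<^sup>L M w = lam * integral\<^sup>L M ?u + integral\<^sup>L M (\<lambda>x. \<phi> x * ?u x)" using A0z by simp
    have pup: "AE x in M. 0 \<le> \<phi> x * ?u x" using up assms(5) by (auto elim!: eventually_mono)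
    have "l1norm M (K w) = integral\<^sup>L M (K w)" by (rule l1norm_nonneg_eq[OF Kpos[OF w wp]]) (use KL1[OF w] in auto)
    also have "\<dots> = integral\<^sup>L M (\<lambda>x. \<phi> x * ?u x)" unfolding K_def using stoch_pos_int[OF assms(6) pui pup] by simp
    also have "\<dots> = integral\<^sup>L M w - lam * integral\<^sup>L M ?u" using I by simp
    also have "integral\<^sup>L M w = l1norm M w" by (rule l1norm_nonneg_eq[symmetric, OF wp]) (use w in auto)
    also have "integral\<^sup>L M ?u = l1norm M ?u" by (rule l1norm_nonneg_eq[symmetric, OF up]) (use ui in auto)
    finally show ?thesis .
  qed
  have Kgood: "good_op M K"
  proof -
    have lin: "lin_op M K"
      unfolding lin_op_def L1_def
    proof (intro conjI ballI allI impI)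
      fix f :: "'a \<Rightarrow> real" assume "f \<in> {f. integrable M f}" then show "K f \<in> {f. integrable M f}" using KL1 by auto
    next
      fix f g :: "'a \<Rightarrow> real" assume fg: "f \<in> {f. integrable M f}" "g \<in> {f. integrable M f}" and e: "ae_eq M f g"
      have "ae_eq M (resolvent M D A lam f) (resolvent M D A lam g)" by (rule R_cong) (use fg e in auto)
      then have "ae_eq M (\<lambda>y. \<phi> y * resolvent M D A lam f y) (\<lambda>y. \<phi> y * resolvent M D A lam g y)"
        unfolding ae_eq_def by (auto elim!: eventually_mono)
      then show "ae_eq M (K f) (K g)" unfolding K_def by (rule lin_cong[OF PL phiR phiR, rotated 2]) (use fg in auto)
    next
      fix f g :: "'a \<Rightarrow> real" and a b :: real assume fg: "f \<in> {f. integrable M f}" "g \<in> {f. integrable M f}"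
      then have fi: "integrable M f" and gi: "integrable M g" by auto
      have "ae_eq M (resolvent M D A lam (\<lambda>x. a * f x + b * g x)) (\<lambda>x. a * resolvent M D A lam f x + b * resolvent M D A lam g x)"
        by (rule R_lin[OF fi gi])
      then have EE: "ae_eq M (\<lambda>y. \<phi> y * resolvent M D A lam (\<lambda>x. a * f x + b * g x) y)
          (\<lambda>y. a * (\<phi> y * resolvent M D A lam f y) + b * (\<phi> y * resolvent M D A lam g y))"
        unfolding ae_eq_def by (auto elim!: eventually_mono simp: algebra_simps)
      then have "ae_eq M (K (\<lambda>x. a * f x + b * g x)) (P (\<lambda>y. a * (\<phi> y * resolvent M D A lam f y) + b * (\<phi> y * resolvent M D A lam g y)))"
      proof -
        have Fi: "integrable M (\<lambda>x. a * f x + b * g x)" using fi gi by auto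
        have Gi: "integrable M (\<lambda>y. a * (\<phi> y * resolvent M D A lam f y) + b * (\<phi> y * resolvent M D A lam g y))"
          using phiR[OF fi] phiR[OF gi] by auto
        show ?thesis unfolding K_def by (rule lin_cong[OF PL phiR[OF Fi] Gi EE])
      qed
      moreover have "ae_eq M (P (\<lambda>y. a * (\<phi> y * resolvent M D A lam f y) + b * (\<phi> y * resolvent M D A lam g y))) (\<lambda>x. a * K f x + b * K g x)"
        unfolding K_def by (rule lin_lin[OF PL phiR[OF fi] phiR[OF gi]])
      ultimately show "ae_eq M (K (\<lambda>x. a * f x + b * g x)) (\<lambda>x. a * K f x + b * K g x)" by (rule ae_eq_trans)
    qed
    have pos: "positive_op M K" unfolding positive_op_def L1_def using Kpos by auto
    have "contraction_op M K"
    proof (rule pos_contr[OF lin pos])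
      fix w :: "'a \<Rightarrow> real" assume w: "integrable M w" and wp: "AE x in M. 0 \<le> w x"
      show "l1norm M (K w) \<le> l1norm M w" using Knorm[OF w wp] lam l1norm_nonneg[of M "resolvent M D A lam w"]
        by (simp add: mult_nonneg_nonneg)
    qed
    then show ?thesis using lin pos unfolding good_op_def by auto
  qed
  have NF: "AE x in M. w x = 0" if w: "integrable M w" and wp: "AE x in M. 0 \<le> w x" and e: "ae_eq M (K w) w" for w
  proof -
    have "l1norm M (K w) = l1norm M w" by (rule l1norm_cong[OF KL1[OF w] w e])
    then have "lam * l1norm M (resolvent M D A lam w) = 0" using Knorm[OF w wp] by simp
    then have "l1norm M (resolvent M D A lam w) = 0" using lam by simp
    then have "AE x in M. resolvent M D A lam w x = 0" using l1norm_zero_iff[OF R_int[OF w]] by simp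
    then show ?thesis by (rule R_zero_imp[OF w])
  qed
  have v: "integrable M v" using assms(13) by (simp add: L1_def)
  have vp: "AE x in M. 0 \<le> v x" using assms(14) by (auto elim!: eventually_mono)
  have Kv: "AE x in M. K v x \<le> v x" using assms(15) unfolding K_def .
  have Kv0: "(\<lambda>n. l1norm M ((K ^^ n) v)) \<longlonglongrightarrow> 0" by (rule main_v[OF Kgood NF v vp Kv])
  have KK: "K = (\<lambda>w. P (\<lambda>y. \<phi> y * resolvent M D A lam w y))" unfolding K_def by (rule ext) simp
  show ?thesis
  proof
    fix u assume "u \<in> L1 M" then have u: "integrable M u" by (simp add: L1_def)
    show "(\<lambda>n. l1norm M (((\<lambda>w. P (\<lambda>y. \<phi> y * resolvent M D A lam w y)) ^^ n) u)) \<longlonglongrightarrow> 0"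
      using main_u[OF Kgood Kv0 v assms(14) u] unfolding KK .
  qed
qed


end
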